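(* Let $G$ and $H$ be fully supported graphs. Then $G$ and $H$ are weakly disjoint if and only if their transition matrices share no eigenvalue other than $1$ and the eigenvalue $1$ has overlapping multiplicity one.
   Context: A weight function on a finite set $U$ is $\alpha:U\times U\to\mathbb{R}$ with $\alpha\ge0$, $\alpha(u,u')=\alpha(u',u)$, $\sum\alpha=1$; degree $p(u)=\sum_{u'}\alpha(u,u')$. A graph is $G=(U,\alpha)$; it is fully supported if $p(u)>0$ for all $u$. The transition matrix of a fully supported $G$ with $U=\{u_1,\dots,u_m\}$ is the matrix with entries $\alpha(u_i,u_j)/p(u_i)$. Two matrices share an eigenvalue $\lambda$ with overlapping multiplicity $k$ if $\lambda$ is an eigenvalue of both and $k$ is the minimum of its algebraic multiplicities in the two matrices. For graphs $G=(U,\alpha)$, $H=(V,\beta)$ with degrees $p,q$, a weight joining is a weight function $\gamma$ on $U\times V$ with degree $r(u,v)=\sum_{(u',v')}\gamma((u,v),(u',v'))$ such that $\sum_v r(u,v)=p(u)$, $\sum_u r(u,v)=q(v)$, $p(u)\sum_{\tilde v}\gamma((u,v),(u',\tilde v))=\alpha(u,u')r(u,v)$ and $q(v)\sum_{\tilde u}\gamma((u,v),(\tilde u,v'))=\beta(v,v')r(u,v)$ for all $u,u',v,v'$. $G$ and $H$ are weakly disjoint if every weight joining has degree function $r(u,v)=p(u)q(v)$. *)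

theory Defs
  imports "Jordan_Normal_Form.Char_Poly"
begin

text \<open>A weight function on a finite set U, represented as a real function on the ambient
  type that vanishes outside U x U.\<close>
definition weight_fun :: "'a set \<Rightarrow> ('a \<Rightarrow> 'a \<Rightarrow> real) \<Rightarrow> bool" where
  "weight_fun U \<alpha> \<longleftrightarrow> finite U
     \<and> (\<forall>u u'. (u \<notin> U \<or> u' \<notin> U) \<longrightarrow> \<alpha> u u' = 0)
     \<and> (\<forall>u u'. \<alpha> u u' \<ge> 0)
     \<and> (\<forall>u u'. \<alpha> u u' = \<alpha> u' u)
     \<and> (\<Sum>u\<in>U. \<Sum>u'\<in>U. \<alpha> u u') = 1"

definition degree_fun :: "'a set \<Rightarrow> ('a \<Rightarrow> 'a \<Rightarrow> real) \<Rightarrow> 'a \<Rightarrow> real" where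
  "degree_fun U \<alpha> u = (\<Sum>u'\<in>U. \<alpha> u u')"

definition fully_supported :: "'a set \<Rightarrow> ('a \<Rightarrow> 'a \<Rightarrow> real) \<Rightarrow> bool" where
  "fully_supported U \<alpha> \<longleftrightarrow> weight_fun U \<alpha> \<and> (\<forall>u\<in>U. degree_fun U \<alpha> u > 0)"

definition enum_set :: "'a set \<Rightarrow> 'a list" where
  "enum_set U = (SOME xs. distinct xs \<and> set xs = U)"

definition transition_mat :: "'a set \<Rightarrow> ('a \<Rightarrow> 'a \<Rightarrow> real) \<Rightarrow> complex mat" where
  "transition_mat U \<alpha> = (let xs = enum_set U in
     mat (length xs) (length xs)
       (\<lambda>(i, j). complex_of_real (\<alpha> (xs ! i) (xs ! j) / degree_fun U \<alpha> (xs ! i))))"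

definition alg_mult :: "complex mat \<Rightarrow> complex \<Rightarrow> nat" where
  "alg_mult A c = order c (char_poly A)"

definition share_eigenvalue_overlap :: "complex mat \<Rightarrow> complex mat \<Rightarrow> complex \<Rightarrow> nat \<Rightarrow> bool" where
  "share_eigenvalue_overlap A B c k \<longleftrightarrow> eigenvalue A c \<and> eigenvalue B c
     \<and> k = min (alg_mult A c) (alg_mult B c)"

definition weight_joining :: "'a set \<Rightarrow> ('a \<Rightarrow> 'a \<Rightarrow> real) \<Rightarrow> 'b set \<Rightarrow> ('b \<Rightarrow> 'b \<Rightarrow> real)
    \<Rightarrow> ('a \<times> 'b \<Rightarrow> 'a \<times> 'b \<Rightarrow> real) \<Rightarrow> bool" where
  "weight_joining U \<alpha> V \<beta> \<gamma> \<longleftrightarrow> weight_fun (U \<times> V) \<gamma>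
     \<and> (\<forall>u\<in>U. (\<Sum>v\<in>V. degree_fun (U \<times> V) \<gamma> (u, v)) = degree_fun U \<alpha> u)
     \<and> (\<forall>v\<in>V. (\<Sum>u\<in>U. degree_fun (U \<times> V) \<gamma> (u, v)) = degree_fun V \<beta> v)
     \<and> (\<forall>u\<in>U. \<forall>u'\<in>U. \<forall>v\<in>V.
          degree_fun U \<alpha> u * (\<Sum>v'\<in>V. \<gamma> (u, v) (u', v'))
            = \<alpha> u u' * degree_fun (U \<times> V) \<gamma> (u, v))
     \<and> (\<forall>u\<in>U. \<forall>v\<in>V. \<forall>v'\<in>V.
          degree_fun V \<beta> v * (\<Sum>u'\<in>U. \<gamma> (u, v) (u', v'))
            = \<beta> v v' * degree_fun (U \<times> V) \<gamma> (u, v))"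

definition weakly_disjoint :: "'a set \<Rightarrow> ('a \<Rightarrow> 'a \<Rightarrow> real) \<Rightarrow> 'b set \<Rightarrow> ('b \<Rightarrow> 'b \<Rightarrow> real) \<Rightarrow> bool" where
  "weakly_disjoint U \<alpha> V \<beta> \<longleftrightarrow> (\<forall>\<gamma>. weight_joining U \<alpha> V \<beta> \<gamma> \<longrightarrow>
     (\<forall>u\<in>U. \<forall>v\<in>V. degree_fun (U \<times> V) \<gamma> (u, v) = degree_fun U \<alpha> u * degree_fun V \<beta> v))"

end

theory Submission
  imports Defs Jordan_Normal_Form.Jordan_Normal_Form_Uniqueness Jordan_Normal_Form.Jordan_Normal_Form_Existence
begin


locale revm =
  fixes n :: nat and m :: "nat \<Rightarrow> nat \<Rightarrow> real" and w :: "nat \<Rightarrow> real"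
  assumes wpos: "\<And>i. i < n \<Longrightarrow> w i > 0"
    and wsym: "\<And>i j. i < n \<Longrightarrow> j < n \<Longrightarrow> w i * m i j = w j * m j i"
begin

definition M :: "complex mat" where "M = mat n n (\<lambda>(i,j). complex_of_real (m i j))"

lemma M_carrier[simp]: "M \<in> carrier_mat n n" and M_dim[simp]: "dim_row M = n" "dim_col M = n"
  unfolding M_def by auto

lemma Mv_idx: "x \<in> carrier_vec n \<Longrightarrow> i < n \<Longrightarrow>
   (M *\<^sub>v x) $ i = (\<Sum>j\<in>{0..<n}. complex_of_real (m i j) * x $ j)"
  unfolding M_def by (auto simp: scalar_prod_def)

definition ip :: "complex vec \<Rightarrow> complex vec \<Rightarrow> complex" where
  "ip x y = (\<Sum>i\<in>{0..<n}. complex_of_real (w i) * cnj (x $ i) * y $ i)"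

lemma ip_Mv: assumes x: "x \<in> carrier_vec n" and y: "y \<in> carrier_vec n"
  shows "ip x (M *\<^sub>v y) = (\<Sum>i\<in>{0..<n}. \<Sum>j\<in>{0..<n}. complex_of_real (w i * m i j) * cnj (x $ i) * y $ j)"
proof -
  have "ip x (M *\<^sub>v y) = (\<Sum>i\<in>{0..<n}. complex_of_real (w i) * cnj (x $ i) * (\<Sum>j\<in>{0..<n}. complex_of_real (m i j) * y $ j))"
    unfolding ip_def by (intro sum.cong refl, subst Mv_idx[OF y], auto)
  also have "\<dots> = (\<Sum>i\<in>{0..<n}. \<Sum>j\<in>{0..<n}. complex_of_real (w i * m i j) * cnj (x $ i) * y $ j)"
    by (intro sum.cong refl, simp add: sum_distrib_left mult_ac)
  finally show ?thesis .
qed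

lemma ip_vM: assumes x: "x \<in> carrier_vec n" and y: "y \<in> carrier_vec n"
  shows "ip (M *\<^sub>v x) y = (\<Sum>i\<in>{0..<n}. \<Sum>j\<in>{0..<n}. complex_of_real (w i * m i j) * cnj (x $ j) * y $ i)"
proof -
  have "ip (M *\<^sub>v x) y = (\<Sum>i\<in>{0..<n}. complex_of_real (w i) * cnj (\<Sum>j\<in>{0..<n}. complex_of_real (m i j) * x $ j) * y $ i)"
    unfolding ip_def by (intro sum.cong refl, subst Mv_idx[OF x], auto)
  also have "\<dots> = (\<Sum>i\<in>{0..<n}. \<Sum>j\<in>{0..<n}. complex_of_real (w i * m i j) * cnj (x $ j) * y $ i)"
    by (intro sum.cong refl, simp add: sum_distrib_left sum_distrib_right mult_ac)
  finally show ?thesis .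
qed

lemma ip_M: assumes x: "x \<in> carrier_vec n" and y: "y \<in> carrier_vec n"
  shows "ip x (M *\<^sub>v y) = ip (M *\<^sub>v x) y"
proof -
  have "ip x (M *\<^sub>v y) = (\<Sum>i\<in>{0..<n}. \<Sum>j\<in>{0..<n}. complex_of_real (w j * m j i) * cnj (x $ i) * y $ j)"
    unfolding ip_Mv[OF x y] by (intro sum.cong refl, simp add: wsym)
  also have "\<dots> = (\<Sum>j\<in>{0..<n}. \<Sum>i\<in>{0..<n}. complex_of_real (w j * m j i) * cnj (x $ i) * y $ j)"
    by (rule sum.swap)
  also have "\<dots> = ip (M *\<^sub>v x) y"
    unfolding ip_vM[OF x y] ..
  finally show ?thesis .
qed

lemma ip_add_left: "x \<in> carrier_vec n \<Longrightarrow> y \<in> carrier_vec n \<Longrightarrow> ip (x + y) z = ip x z + ip y z"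
  unfolding ip_def sum.distrib[symmetric] by (intro sum.cong refl) (simp add: algebra_simps)

lemma ip_smult_left: "x \<in> carrier_vec n \<Longrightarrow> ip (k \<cdot>\<^sub>v x) z = cnj k * ip x z"
  unfolding ip_def sum_distrib_left by (intro sum.cong refl) (simp add: mult_ac)

lemma ip_smult_right: "z \<in> carrier_vec n \<Longrightarrow> ip x (k \<cdot>\<^sub>v z) = k * ip x z"
  unfolding ip_def sum_distrib_left by (intro sum.cong refl) (simp add: mult_ac)

lemma ip_zero_right: "ip x (0\<^sub>v n) = 0"
  unfolding ip_def by auto

lemma ip_self: "ip x x = complex_of_real (\<Sum>i\<in>{0..<n}. w i * (cmod (x $ i))^2)"
  unfolding ip_def of_real_sum
proof (intro sum.cong refl)
  fix i
  have "cnj (x $ i) * x $ i = complex_of_real ((cmod (x $ i))^2)"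
    by (subst complex_norm_square, simp add: mult.commute)
  then show "complex_of_real (w i) * cnj (x $ i) * x $ i = complex_of_real (w i * (cmod (x $ i))\<^sup>2)"
    by (simp only: of_real_mult mult.assoc)
qed

lemma ip_self_zero: assumes x: "x \<in> carrier_vec n" and z: "ip x x = 0" shows "x = 0\<^sub>v n"
proof (rule ccontr)
  assume "x \<noteq> 0\<^sub>v n"
  then obtain i where i: "i < n" "x $ i \<noteq> 0" using x by (metis eq_vecI carrier_vecD index_zero_vec(1) index_zero_vec(2))
  have p: "0 < w i * (cmod (x$i))^2" using wpos[OF i(1)] i(2) by simp
  have nn: "\<And>j. j \<in> {0..<n} \<Longrightarrow> 0 \<le> w j * (cmod (x$j))^2" using wpos by (simp add: less_imp_le)
  have "(\<Sum>i\<in>{0..<n}. w i * (cmod (x $ i))^2) > 0"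
    by (rule sum_pos2[of "{0..<n}" i "\<lambda>i. w i * (cmod (x$i))^2"], use i p nn in auto)
  with z[unfolded ip_self of_real_eq_0_iff] show False by simp
qed

lemma eigen_real: assumes "eigenvector M x c" shows "cnj c = c"
proof -
  from assms have x: "x \<in> carrier_vec n" "x \<noteq> 0\<^sub>v n" and Mx: "M *\<^sub>v x = c \<cdot>\<^sub>v x"
    unfolding eigenvector_def by auto
  have "c * ip x x = cnj c * ip x x"
    using ip_M[OF x(1) x(1)] unfolding Mx ip_smult_left[OF x(1)] ip_smult_right[OF x(1)] .
  moreover have "ip x x \<noteq> 0" using ip_self_zero x by auto
  ultimately show ?thesis by simp
qed

end


context revm
begin

lemma char_mv: assumes v: "v \<in> carrier_vec n"
  shows "char_matrix M e *\<^sub>v v = M *\<^sub>v v + (-e) \<cdot>\<^sub>v v"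
proof -
  have "char_matrix M e *\<^sub>v v = M *\<^sub>v v + ((-e) \<cdot>\<^sub>m 1\<^sub>m n) *\<^sub>v v"
    unfolding char_matrix_def M_dim using v by (subst add_mult_distrib_mat_vec[of _ n n], auto)
  also have "((-e) \<cdot>\<^sub>m 1\<^sub>m n) *\<^sub>v v = (-e) \<cdot>\<^sub>v v" using v
  proof (intro eq_vecI)
    fix i assume i: "i < dim_vec ((- e) \<cdot>\<^sub>v v)"
    have "(\<Sum>ia = 0..<n. - (e * (if ia = i then 1 else 0) * v $ ia)) = (\<Sum>ia = 0..<n. if ia = i then - (e * v $ ia) else 0)"
      by (intro sum.cong) auto
    also have "\<dots> = - (e * v $ i)" using i v by (simp add: sum.delta)
    finally show "((- e) \<cdot>\<^sub>m 1\<^sub>m n *\<^sub>v v) $ i = ((- e) \<cdot>\<^sub>v v) $ i" using i v by (auto simp: scalar_prod_def)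
  qed (use v in auto)
  finally show ?thesis .
qed

lemma char_dim[simp]: "dim_row (char_matrix M e) = n" "dim_col (char_matrix M e) = n"
  by (simp_all add: char_matrix_def)

lemma ker2: assumes v: "v \<in> carrier_vec n"
  and cc: "char_matrix M e *\<^sub>v (char_matrix M e *\<^sub>v v) = 0\<^sub>v n"
  shows "char_matrix M e *\<^sub>v v = 0\<^sub>v n"
proof (rule ccontr)
  define y where "y = char_matrix M e *\<^sub>v v"
  assume "\<not> ?thesis"
  hence y0: "y \<noteq> 0\<^sub>v n" unfolding y_def .
  have Mv: "M *\<^sub>v v \<in> carrier_vec n" by (rule mult_mat_vec_carrier[OF M_carrier v])
  have y: "y \<in> carrier_vec n" unfolding y_def char_mv[OF v] using v Mv by auto
  have yv: "y = M *\<^sub>v v + (-e) \<cdot>\<^sub>v v" unfolding y_def by (rule char_mv[OF v])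
  have "M *\<^sub>v y + (-e) \<cdot>\<^sub>v y = 0\<^sub>v n" using cc char_mv[OF y] unfolding y_def by simp
  hence "\<And>i. i < n \<Longrightarrow> (M *\<^sub>v y + (-e) \<cdot>\<^sub>v y) $ i = 0" by simp
  hence "\<And>i. i < n \<Longrightarrow> (M *\<^sub>v y) $ i + (-e) * y $ i = 0" using y by simp
  hence My: "M *\<^sub>v y = e \<cdot>\<^sub>v y"
    using y by (intro eq_vecI, auto simp: algebra_simps eq_neg_iff_add_eq_0)
  have ev: "eigenvector M y e" unfolding eigenvector_def using y y0 My by auto
  have ce: "cnj e = e" by (rule eigen_real[OF ev])
  have "ip y y = ip (M *\<^sub>v v) y + cnj (-e) * ip v y"
    unfolding yv by (subst ip_add_left[OF Mv], use v in \<open>auto simp: ip_smult_left\<close>)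
  also have "ip (M *\<^sub>v v) y = ip v (M *\<^sub>v y)" using ip_M[OF v y] by simp
  also have "\<dots> = e * ip v y" unfolding My by (rule ip_smult_right[OF y])
  finally have "ip y y = 0" using ce by simp
  from ip_self_zero[OF y this] y0 show False by simp
qed

lemma mat_kernel_sq: "mat_kernel (char_matrix M e ^\<^sub>m 2) = mat_kernel (char_matrix M e)"
proof -
  let ?C = "char_matrix M e"
  have C: "?C \<in> carrier_mat n n" by simp
  have C2: "?C ^\<^sub>m 2 = ?C * ?C" using C by (simp add: numeral_2_eq_2)
  show ?thesis
  proof (intro equalityI subsetI)
    fix v assume "v \<in> mat_kernel (?C ^\<^sub>m 2)"
    hence v: "v \<in> carrier_vec n" and "(?C * ?C) *\<^sub>v v = 0\<^sub>v n" unfolding C2 mat_kernel_def using C by auto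
    hence "?C *\<^sub>v (?C *\<^sub>v v) = 0\<^sub>v n" using C by (simp add: assoc_mult_mat_vec[of _ n n _ n])
    from ker2[OF v this] v show "v \<in> mat_kernel ?C" unfolding mat_kernel_def using C by auto
  next
    fix v assume "v \<in> mat_kernel ?C"
    hence v: "v \<in> carrier_vec n" and "?C *\<^sub>v v = 0\<^sub>v n" unfolding mat_kernel_def using C by auto
    moreover have "?C *\<^sub>v 0\<^sub>v n = 0\<^sub>v n" by (intro eq_vecI) (auto simp: scalar_prod_def)
    ultimately have "(?C * ?C) *\<^sub>v v = 0\<^sub>v n" unfolding assoc_mult_mat_vec[OF C C v] by simp
    then show "v \<in> mat_kernel (?C ^\<^sub>m 2)" unfolding C2 by (rule mat_kernelI[OF mult_carrier_mat[OF C C] v])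
  qed
qed

lemma dim_gen_1_2: "dim_gen_eigenspace M e 2 = dim_gen_eigenspace M e 1"
proof -
  let ?C = "char_matrix M e"
  have C: "?C \<in> carrier_mat n n" by simp
  have C1: "?C ^\<^sub>m 1 = ?C" using C by simp
  have d: "dim_col (?C ^\<^sub>m 2) = n" "dim_col ?C = n" using C by (auto dest: carrier_matD)
  show ?thesis unfolding dim_gen_eigenspace_def kernel_dim_def C1 mat_kernel_sq d using C by simp
qed

end

lemma sum_list_min12: "sum_list (map (min (2::nat)) L) = sum_list (map (min 1) L) \<Longrightarrow> x \<in> set L \<Longrightarrow> x \<le> 1"
proof (induct L)
  case (Cons a L)
  have "sum_list (map (min (2::nat)) L) \<ge> sum_list (map (min 1) L)"
    by (rule sum_list_mono, simp)
  moreover have "min (2::nat) a \<ge> min 1 a" by simp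
  ultimately have "min (2::nat) a = min 1 a" "sum_list (map (min (2::nat)) L) = sum_list (map (min 1) L)"
    using Cons(2) by auto
  then show ?case using Cons by auto
qed simp

lemma sum_list_fst_1: "\<forall>x\<in>set L. fst x = (1::nat) \<Longrightarrow> sum_list (map fst L) = length L"
  by (induct L, auto)

lemma jordan_matrix_diag: "\<forall>x\<in>set n_as. fst x = 1 \<Longrightarrow>
  jordan_matrix n_as = mat_diag (length n_as) (\<lambda>i. snd (n_as ! i))"
proof (induct n_as)
  case Nil
  show ?case by (intro eq_matI, auto simp: jordan_matrix_def mat_diag_def)
next
  case (Cons na n_as)
  obtain s a where na: "na = (s,a)" by force
  with Cons have s: "s = 1" by auto
  have IH: "jordan_matrix n_as = mat_diag (length n_as) (\<lambda>i. snd (n_as ! i))" using Cons by auto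
  have sl: "sum_list (map fst n_as) = length n_as" using Cons(2) sum_list_fst_1 by auto
  show ?case unfolding na s jordan_matrix_Cons sl IH
    by (intro eq_matI, auto simp: mat_diag_def jordan_block_def nth_Cons split: nat.splits)
qed

context revm begin

lemma diagonalize: obtains S S' d where "S \<in> carrier_mat n n" "S' \<in> carrier_mat n n"
  "S * S' = 1\<^sub>m n" "S' * S = 1\<^sub>m n" "M = S * mat_diag n d * S'"
  "\<forall>a. Polynomial.order a (char_poly M) = card {i. i < n \<and> d i = a}"
proof -
  from char_poly_factorized[OF M_carrier] obtain as where "char_poly M = (\<Prod>a\<leftarrow>as. [:- a, 1:])" by auto
  from jordan_nf_exists[OF M_carrier this] obtain n_as where jnf: "jordan_nf M n_as" by auto
  have blocks: "\<forall>x\<in>set n_as. fst x = 1"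
  proof
    fix x assume x: "x \<in> set n_as"
    obtain s e where xe: "x = (s,e)" by force
    have "sum_list (map (min 2) (map fst (filter (\<lambda>(n, e'). e' = e) n_as)))
      = sum_list (map (min 1) (map fst (filter (\<lambda>(n, e'). e' = e) n_as)))"
      using dim_gen_1_2[of e] unfolding dim_gen_eigenspace[OF jnf] .
    moreover have "s \<in> set (map fst (filter (\<lambda>(n, e'). e' = e) n_as))" using x xe by force
    ultimately have "s \<le> 1" by (rule sum_list_min12)
    moreover have "s \<noteq> 0" using jnf x xe unfolding jordan_nf_def by force
    ultimately show "fst x = 1" using xe by auto
  qed
  define d where "d = (\<lambda>i. snd (n_as ! i))"
  have J: "jordan_matrix n_as = mat_diag (length n_as) d" unfolding d_def by (rule jordan_matrix_diag[OF blocks])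
  from jnf[unfolded jordan_nf_def] obtain S S' where wit: "similar_mat_wit M (jordan_matrix n_as) S S'"
    unfolding similar_mat_def by auto
  note W = similar_mat_witD[OF M_dim(1)[symmetric] wit, unfolded J]
  have S: "S \<in> carrier_mat n n" "S' \<in> carrier_mat n n" by (rule W(6), rule W(7))
  have SS: "S * S' = 1\<^sub>m n" "S' * S = 1\<^sub>m n" by (rule W(1), rule W(2))
  have Md: "M = S * mat_diag (length n_as) d * S'" by (rule W(3))
  have Dc: "mat_diag (length n_as) d \<in> carrier_mat n n" by (rule W(5))
  have len: "length n_as = n" using carrier_matD(1)[OF Dc] unfolding mat_diag_def by simp
  have ord: "Polynomial.order a (char_poly M) = card {i. i < n \<and> d i = a}" for a
  proof -
    have "Polynomial.order a (char_poly M) = sum_list (map fst (filter (\<lambda>na. snd na = a) n_as))"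
      by (rule jordan_nf_order[OF jnf])
    also have "\<dots> = length (filter (\<lambda>na. snd na = a) n_as)"
      by (rule sum_list_fst_1, use blocks in auto)
    also have "\<dots> = card {i. i < n \<and> d i = a}" unfolding length_filter_conv_card d_def len ..
    finally show ?thesis .
  qed
  show ?thesis by (rule that[OF S SS Md[unfolded len]], use ord in auto)
qed

end


lemma mat_diag_mult_vec: "c \<in> carrier_vec n \<Longrightarrow> i < n \<Longrightarrow> (mat_diag n d *\<^sub>v c) $ i = d i * c $ i"
proof -
  assume c: "c \<in> carrier_vec n" and i: "i < n"
  have "(mat_diag n d *\<^sub>v c) $ i = (\<Sum>j = 0..<n. (if i = j then d j else 0) * c $ j)"
    using c i by (simp add: mat_diag_def scalar_prod_def)
  also have "\<dots> = (\<Sum>j = 0..<n. if j = i then d i * c $ i else 0)" by (intro sum.cong) auto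
  also have "\<dots> = d i * c $ i" using i by simp
  finally show ?thesis .
qed

lemma mat_diag_mult_mat_idx: "W \<in> carrier_mat n k \<Longrightarrow> i < n \<Longrightarrow> j < k \<Longrightarrow> (mat_diag n d * W) $$ (i,j) = d i * W $$ (i,j)"
  by (subst mat_diag_mult_left, auto)

context revm begin

lemma diag_facts: obtains S S' d where "S \<in> carrier_mat n n" "S' \<in> carrier_mat n n"
  "S * S' = 1\<^sub>m n" "S' * S = 1\<^sub>m n" "M * S = S * mat_diag n d" "S' * M = mat_diag n d * S'"
  "\<forall>a. Polynomial.order a (char_poly M) = card {i. i < n \<and> d i = a}"
proof -
  obtain S S' d where S: "S \<in> carrier_mat n n" "S' \<in> carrier_mat n n"
    and SS: "S * S' = 1\<^sub>m n" "S' * S = 1\<^sub>m n" and Md: "M = S * mat_diag n d * S'"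
    and ord: "\<forall>a. Polynomial.order a (char_poly M) = card {i. i < n \<and> d i = a}"
    by (rule diagonalize)
  have D: "mat_diag n d \<in> carrier_mat n n" by simp
  have SD: "S * mat_diag n d \<in> carrier_mat n n" using S D by simp
  have "M * S = (S * mat_diag n d) * (S' * S)" unfolding Md by (rule assoc_mult_mat[OF SD S(2) S(1)])
  also have "\<dots> = S * mat_diag n d" unfolding SS(2) by (rule right_mult_one_mat[OF SD])
  finally have 1: "M * S = S * mat_diag n d" .
  have "S' * M = (S' * (S * mat_diag n d)) * S'" unfolding Md by (rule assoc_mult_mat[OF S(2) SD S(2), symmetric])
  also have "S' * (S * mat_diag n d) = (S' * S) * mat_diag n d" by (rule assoc_mult_mat[OF S(2) S(1) D, symmetric])
  also have "\<dots> = mat_diag n d" unfolding SS(2) by (rule left_mult_one_mat[OF D])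
  finally have 2: "S' * M = mat_diag n d * S'" .
  show ?thesis by (rule that[OF S SS 1 2 ord])
qed

lemma inv_vec: fixes S :: "complex mat" assumes S: "S \<in> carrier_mat n n" "S' \<in> carrier_mat n n" and SS: "S * S' = 1\<^sub>m n"
  and x: "x \<in> carrier_vec n" shows "S *\<^sub>v (S' *\<^sub>v x) = x"
proof -
  have "S *\<^sub>v (S' *\<^sub>v x) = (S * S') *\<^sub>v x" using S x by (simp add: assoc_mult_mat_vec[OF S(1) S(2) x])
  also have "\<dots> = x" unfolding SS by (rule one_mult_mat_vec[OF x])
  finally show ?thesis .
qed

lemma fixed_multiple:
  assumes o1: "Polynomial.order 1 (char_poly M) = 1"
    and x: "x \<in> carrier_vec n" "M *\<^sub>v x = x"
    and z: "z \<in> carrier_vec n" "M *\<^sub>v z = z" "z \<noteq> 0\<^sub>v n"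
  shows "\<exists>k. x = k \<cdot>\<^sub>v z"
proof -
  obtain S S' d where S: "S \<in> carrier_mat n n" "S' \<in> carrier_mat n n"
    and SS: "S * S' = 1\<^sub>m n" "S' * S = 1\<^sub>m n" and MS: "M * S = S * mat_diag n d"
    and SM: "S' * M = mat_diag n d * S'"
    and ord: "\<forall>a. Polynomial.order a (char_poly M) = card {i. i < n \<and> d i = a}"
    by (rule diag_facts)
  have D: "mat_diag n d \<in> carrier_mat n n" by simp
  have fix0: "(S' *\<^sub>v y) $ i = 0" if y: "y \<in> carrier_vec n" "M *\<^sub>v y = y" and i: "i < n" "d i \<noteq> 1" for y i
  proof -
    have "mat_diag n d *\<^sub>v (S' *\<^sub>v y) = S' *\<^sub>v y"
      using y(2) assoc_mult_mat_vec[OF D S(2) y(1)] assoc_mult_mat_vec[OF S(2) M_carrier y(1)] SM by simp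
    hence "d i * (S' *\<^sub>v y) $ i = (S' *\<^sub>v y) $ i"
      using mat_diag_mult_vec[of "S' *\<^sub>v y" n i d] S y i by simp
    with i(2) show ?thesis by (simp add: mult_cancel_right2)
  qed
  have "card {i. i < n \<and> d i = 1} = 1" using o1 ord by simp
  then obtain i0 where I: "{i. i < n \<and> d i = 1} = {i0}" by (rule card_1_singletonE)
  hence i0: "i0 < n" "d i0 = 1" and oth: "\<And>i. i < n \<Longrightarrow> i \<noteq> i0 \<Longrightarrow> d i \<noteq> 1" by auto
  define cx where "cx = S' *\<^sub>v x"
  define cz where "cz = S' *\<^sub>v z"
  have cx: "cx \<in> carrier_vec n" "cz \<in> carrier_vec n" unfolding cx_def cz_def using S x z by auto
  have cx0: "\<And>i. i < n \<Longrightarrow> i \<noteq> i0 \<Longrightarrow> cx $ i = 0" unfolding cx_def using fix0[OF x] oth by auto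
  have cz0: "\<And>i. i < n \<Longrightarrow> i \<noteq> i0 \<Longrightarrow> cz $ i = 0" unfolding cz_def using fix0[OF z(1,2)] oth by auto
  have czi0: "cz $ i0 \<noteq> 0"
  proof
    assume "cz $ i0 = 0"
    hence "cz = 0\<^sub>v n" using cz0 cx(2) by (intro eq_vecI, auto)
    hence "S *\<^sub>v cz = 0\<^sub>v n" using S by (intro eq_vecI, auto simp: scalar_prod_def)
    with inv_vec[OF S SS(1) z(1)] z(3) show False unfolding cz_def by simp
  qed
  define k where "k = cx $ i0 / cz $ i0"
  have "cx = k \<cdot>\<^sub>v cz" using cx cx0 cz0 czi0 unfolding k_def by (intro eq_vecI, auto, case_tac "i = i0", auto)
  hence "S *\<^sub>v cx = k \<cdot>\<^sub>v (S *\<^sub>v cz)" using mult_mat_vec[OF S(1) cx(2)] by simp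
  hence "x = k \<cdot>\<^sub>v z" unfolding cx_def cz_def inv_vec[OF S SS(1) x(1)] inv_vec[OF S SS(1) z(1)] .
  thus ?thesis by blast
qed

lemma fixed_nonmultiple:
  assumes o2: "Polynomial.order 1 (char_poly M) \<ge> 2"
    and z: "z \<in> carrier_vec n"
  shows "\<exists>x \<in> carrier_vec n. M *\<^sub>v x = x \<and> (\<forall>k. x \<noteq> k \<cdot>\<^sub>v z)"
proof (rule ccontr)
  assume contra: "\<not> ?thesis"
  obtain S S' d where S: "S \<in> carrier_mat n n" "S' \<in> carrier_mat n n"
    and SS: "S * S' = 1\<^sub>m n" "S' * S = 1\<^sub>m n" and MS: "M * S = S * mat_diag n d"
    and SM: "S' * M = mat_diag n d * S'"
    and ord: "\<forall>a. Polynomial.order a (char_poly M) = card {i. i < n \<and> d i = a}"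
    by (rule diag_facts)
  have D: "mat_diag n d \<in> carrier_mat n n" by simp
  let ?A = "{i. i < n \<and> d i = 1}"
  have cA: "card ?A \<ge> 2" using o2 ord by simp
  have "?A \<noteq> {}" using cA by (intro notI) simp
  then obtain i0 where i0: "i0 \<in> ?A" by blast
  have "card (?A - {i0}) \<ge> 1" using cA i0 by (simp add: card_Diff_singleton)
  hence "?A - {i0} \<noteq> {}" by (intro notI) simp
  then obtain i1 where i1: "i1 \<in> ?A" "i1 \<noteq> i0" by blast
  have fixed: "M *\<^sub>v (S *\<^sub>v unit_vec n i) = S *\<^sub>v unit_vec n i" if i: "i \<in> ?A" for i
  proof -
    have u: "unit_vec n i \<in> carrier_vec n" by simp
    have "mat_diag n d *\<^sub>v unit_vec n i = unit_vec n i"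
      using i by (intro eq_vecI, auto simp: mat_diag_mult_vec[OF u], auto simp: mat_diag_def)
    moreover have "M *\<^sub>v (S *\<^sub>v unit_vec n i) = S *\<^sub>v (mat_diag n d *\<^sub>v unit_vec n i)"
      using assoc_mult_mat_vec[OF M_carrier S(1) u, symmetric] assoc_mult_mat_vec[OF S(1) D u] MS by simp
    ultimately show ?thesis by simp
  qed
  have mult: "\<exists>k. S *\<^sub>v unit_vec n i = k \<cdot>\<^sub>v z" if i: "i \<in> ?A" for i
    using contra fixed[OF i] S by auto
  obtain k0 where k0: "S *\<^sub>v unit_vec n i0 = k0 \<cdot>\<^sub>v z" using mult[OF i0] by auto
  obtain k1 where k1: "S *\<^sub>v unit_vec n i1 = k1 \<cdot>\<^sub>v z" using mult[OF i1(1)] by auto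
  have bk: "unit_vec n i = k \<cdot>\<^sub>v (S' *\<^sub>v z)" if "S *\<^sub>v unit_vec n i = k \<cdot>\<^sub>v z" for i k
  proof -
    have "unit_vec n i = S' *\<^sub>v (S *\<^sub>v unit_vec n i)" using inv_vec[OF S(2) S(1) SS(2)] by simp
    also have "\<dots> = k \<cdot>\<^sub>v (S' *\<^sub>v z)" unfolding that by (rule mult_mat_vec[OF S(2) z])
    finally show ?thesis .
  qed
  have e0: "unit_vec n i0 = k0 \<cdot>\<^sub>v (S' *\<^sub>v z)" by (rule bk[OF k0])
  have e1: "unit_vec n i1 = k1 \<cdot>\<^sub>v (S' *\<^sub>v z)" by (rule bk[OF k1])
  have n0: "i0 < n" "i1 < n" using i0 i1 by auto
  have "1 = k0 * (S' *\<^sub>v z) $ i0" using arg_cong[OF e0, of "\<lambda>v. v $ i0"] n0 S z by simp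
  moreover have "0 = k1 * (S' *\<^sub>v z) $ i0" using arg_cong[OF e1, of "\<lambda>v. v $ i0"] n0 S z i1 by simp
  ultimately have "k1 = 0" by (cases "(S' *\<^sub>v z) $ i0 = 0") simp_all
  moreover have "1 = k1 * (S' *\<^sub>v z) $ i1" using arg_cong[OF e1, of "\<lambda>v. v $ i1"] n0 S z by simp
  ultimately show False by simp
qed

end


context revm begin

lemma sylvester:
  fixes N Z :: "complex mat"
  assumes N: "N \<in> carrier_mat k k" and Z: "Z \<in> carrier_mat n k"
    and MZ: "M * Z = Z * transpose_mat N"
    and common: "\<And>c. eigenvalue M c \<Longrightarrow> eigenvalue N c \<Longrightarrow> c = 1"
  shows "Z * transpose_mat N = Z"
proof -
  obtain S S' d where S: "S \<in> carrier_mat n n" "S' \<in> carrier_mat n n"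
    and SS: "S * S' = 1\<^sub>m n" "S' * S = 1\<^sub>m n" and MS: "M * S = S * mat_diag n d"
    and SM: "S' * M = mat_diag n d * S'"
    and ord: "\<forall>a. Polynomial.order a (char_poly M) = card {i. i < n \<and> d i = a}"
    by (rule diag_facts)
  define DD where "DD = mat_diag n d"
  have DD: "DD \<in> carrier_mat n n" unfolding DD_def by simp
  define NT where "NT = transpose_mat N"
  have NT: "NT \<in> carrier_mat k k" unfolding NT_def using N by simp
  define W where "W = S' * Z"
  have W: "W \<in> carrier_mat n k" unfolding W_def using S Z by simp
  have "DD * W = (DD * S') * Z" unfolding W_def by (rule assoc_mult_mat[OF DD S(2) Z, symmetric])
  also have "\<dots> = (S' * M) * Z" unfolding SM DD_def ..
  also have "\<dots> = S' * (M * Z)" by (rule assoc_mult_mat[OF S(2) M_carrier Z])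
  also have "\<dots> = S' * (Z * NT)" unfolding MZ NT_def ..
  also have "\<dots> = W * NT" unfolding W_def by (rule assoc_mult_mat[OF S(2) Z NT, symmetric])
  finally have DW: "DD * W = W * NT" .
  have DWW: "DD * W = W"
  proof (rule eq_matI)
    show "dim_row (DD * W) = dim_row W" "dim_col (DD * W) = dim_col W" using DD W by auto
    fix i j assume i: "i < dim_row W" and j: "j < dim_col W"
    hence i: "i < n" and j: "j < k" using W by auto
    have Dij: "(DD * W) $$ (i,j) = d i * W $$ (i,j)" using mat_diag_mult_mat_idx[OF W i j, of d] unfolding DD_def by simp
    show "(DD * W) $$ (i,j) = W $$ (i,j)"
    proof (cases "d i = 1")
      case True thus ?thesis unfolding Dij by simp
    next
      case False
      define r where "r = row W i"
      have r: "r \<in> carrier_vec k" unfolding r_def using W i by auto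
      have Nr: "N *\<^sub>v r = d i \<cdot>\<^sub>v r"
      proof (rule eq_vecI)
        show "dim_vec (N *\<^sub>v r) = dim_vec (d i \<cdot>\<^sub>v r)" using N r by auto
        fix l assume "l < dim_vec (d i \<cdot>\<^sub>v r)"
        hence l: "l < k" using r by auto
        have "(N *\<^sub>v r) $ l = row N l \<bullet> r" using N l by simp
        also have "\<dots> = r \<bullet> row N l" by (rule comm_scalar_prod[of _ k], use N l r in auto)
        also have "\<dots> = (W * NT) $$ (i,l)" unfolding r_def NT_def using W N NT i l by simp
        also have "\<dots> = (DD * W) $$ (i,l)" unfolding DW ..
        also have "\<dots> = d i * W $$ (i,l)" using mat_diag_mult_mat_idx[OF W i l, of d] unfolding DD_def by simp
        also have "\<dots> = (d i \<cdot>\<^sub>v r) $ l" unfolding r_def using W i l by simp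
        finally show "(N *\<^sub>v r) $ l = (d i \<cdot>\<^sub>v r) $ l" .
      qed
      have "r = 0\<^sub>v k"
      proof (rule ccontr)
        assume r0: "r \<noteq> 0\<^sub>v k"
        have evN: "eigenvalue N (d i)" unfolding eigenvalue_def eigenvector_def using N r r0 Nr by auto
        have u: "unit_vec n i \<in> carrier_vec n" by simp
        define y where "y = S *\<^sub>v unit_vec n i"
        have y: "y \<in> carrier_vec n" unfolding y_def using S by simp
        have "M *\<^sub>v y = (M * S) *\<^sub>v unit_vec n i" unfolding y_def by (rule assoc_mult_mat_vec[OF M_carrier S(1) u, symmetric])
        also have "\<dots> = S *\<^sub>v (mat_diag n d *\<^sub>v unit_vec n i)" unfolding MS by (rule assoc_mult_mat_vec[OF S(1) _ u], simp)
        also have "mat_diag n d *\<^sub>v unit_vec n i = d i \<cdot>\<^sub>v unit_vec n i"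
          using i by (intro eq_vecI, auto simp: mat_diag_mult_vec[OF u], auto simp: mat_diag_def)
        also have "S *\<^sub>v (d i \<cdot>\<^sub>v unit_vec n i) = d i \<cdot>\<^sub>v y" unfolding y_def by (rule mult_mat_vec[OF S(1) u])
        finally have My: "M *\<^sub>v y = d i \<cdot>\<^sub>v y" .
        have "S' *\<^sub>v y = unit_vec n i" unfolding y_def by (rule inv_vec[OF S(2) S(1) SS(2) u])
        hence "y \<noteq> 0\<^sub>v n"
        proof (intro notI)
          assume Sy: "S' *\<^sub>v y = unit_vec n i" and y0: "y = 0\<^sub>v n"
          have "S' *\<^sub>v 0\<^sub>v n = 0\<^sub>v n" by (intro eq_vecI) (use S in \<open>auto simp: scalar_prod_def\<close>)
          with Sy y0 have "(unit_vec n i :: complex vec) = 0\<^sub>v n" by metis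
          hence "(unit_vec n i :: complex vec) $ i = 0\<^sub>v n $ i" by simp
          with i show False by simp
        qed
        hence "eigenvalue M (d i)" unfolding eigenvalue_def eigenvector_def using y My by auto
        from common[OF this evN] False show False by simp
      qed
      have "W $$ (i,j) = row W i $ j" using W i j by simp
      also have "\<dots> = 0" using \<open>r = 0\<^sub>v k\<close> j unfolding r_def by simp
      finally have "W $$ (i,j) = 0" .
      thus ?thesis unfolding Dij by simp
    qed
  qed
  have ZSW: "Z = S * W"
  proof -
    have "S * W = (S * S') * Z" unfolding W_def by (rule assoc_mult_mat[OF S(1) S(2) Z, symmetric])
    also have "\<dots> = Z" unfolding SS(1) by (rule left_mult_one_mat[OF Z])
    finally show ?thesis by simp
  qed
  have "Z * NT = S * (W * NT)" unfolding ZSW by (rule assoc_mult_mat[OF S(1) W NT])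
  also have "\<dots> = Z" unfolding DW[symmetric] DWW ZSW ..
  finally show ?thesis unfolding NT_def .
qed

lemma nonzero_vec_idx: assumes x: "x \<in> carrier_vec n" and x0: "x \<noteq> 0\<^sub>v n"
  shows "\<exists>i<n. x $ i \<noteq> 0"
proof (rule ccontr)
  assume "\<not> ?thesis"
  hence "x = 0\<^sub>v n" using x by (intro eq_vecI) auto
  with x0 show False by simp
qed

lemma Mv_eq_idx: assumes x: "x \<in> carrier_vec n" and Mx: "M *\<^sub>v x = c \<cdot>\<^sub>v x" and i: "i < n"
  shows "(\<Sum>j\<in>{0..<n}. complex_of_real (m i j) * x $ j) = c * x $ i"
  using arg_cong[OF Mx, of "\<lambda>v. v $ i"] Mv_idx[OF x i] x i by simp

lemma real_eigvec: assumes ev: "eigenvector M x c"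
  shows "Im c = 0 \<and> (\<exists>f. (\<exists>i<n. f i \<noteq> 0) \<and> (\<forall>i<n. (\<Sum>j\<in>{0..<n}. m i j * f j) = Re c * f i))"
proof -
  from ev have x: "x \<in> carrier_vec n" "x \<noteq> 0\<^sub>v n" and Mx: "M *\<^sub>v x = c \<cdot>\<^sub>v x"
    unfolding eigenvector_def by auto
  have ic: "Im c = 0" using arg_cong[OF eigen_real[OF ev], of Im] by simp
  have eq: "(\<Sum>j\<in>{0..<n}. complex_of_real (m i j) * x $ j) = c * x $ i" if "i < n" for i
    by (rule Mv_eq_idx[OF x(1) Mx that])
  have re: "(\<Sum>j\<in>{0..<n}. m i j * Re (x $ j)) = Re c * Re (x $ i)" if i: "i < n" for i
    using arg_cong[OF eq[OF i], of Re] ic by (simp add: Re_sum)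
  have im: "(\<Sum>j\<in>{0..<n}. m i j * Im (x $ j)) = Re c * Im (x $ i)" if i: "i < n" for i
    using arg_cong[OF eq[OF i], of Im] ic by (simp add: Im_sum)
  obtain i where i: "i < n" "x $ i \<noteq> 0" using nonzero_vec_idx[OF x] by blast
  show ?thesis
  proof (cases "Re (x $ i) = 0")
    case False
    thus ?thesis using ic re i by (intro conjI exI[of _ "\<lambda>j. Re (x $ j)"], auto)
  next
    case True
    hence "Im (x $ i) \<noteq> 0" using i(2) by (simp add: complex_eq_iff)
    thus ?thesis using ic im i by (intro conjI exI[of _ "\<lambda>j. Im (x $ j)"], auto)
  qed
qed

lemma real_fixed_nonconst: assumes x: "x \<in> carrier_vec n" and Mx: "M *\<^sub>v x = x"
  and nm: "\<forall>k. x \<noteq> k \<cdot>\<^sub>v vec n (\<lambda>_. 1)"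
  shows "\<exists>f. (\<forall>i<n. (\<Sum>j\<in>{0..<n}. m i j * f j) = f i) \<and> (\<exists>i<n. \<exists>j<n. f i \<noteq> f j)"
proof -
  have Mx': "M *\<^sub>v x = 1 \<cdot>\<^sub>v x" using Mx x by simp
  have eq: "(\<Sum>j\<in>{0..<n}. complex_of_real (m i j) * x $ j) = x $ i" if "i < n" for i
    using Mv_eq_idx[OF x Mx' that] by simp
  have re: "(\<Sum>j\<in>{0..<n}. m i j * Re (x $ j)) = Re (x $ i)" if i: "i < n" for i
    using arg_cong[OF eq[OF i], of Re] by (simp add: Re_sum)
  have im: "(\<Sum>j\<in>{0..<n}. m i j * Im (x $ j)) = Im (x $ i)" if i: "i < n" for i
    using arg_cong[OF eq[OF i], of Im] by (simp add: Im_sum)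
  have n: "n > 0"
  proof (rule ccontr)
    assume "\<not> n > 0" hence "n = 0" by simp
    hence "x = 0 \<cdot>\<^sub>v vec n (\<lambda>_. 1)" using x by (intro eq_vecI, auto)
    with nm show False by blast
  qed
  show ?thesis
  proof (cases "\<exists>i<n. \<exists>j<n. Re (x $ i) \<noteq> Re (x $ j)")
    case True thus ?thesis using re by (intro exI[of _ "\<lambda>j. Re (x $ j)"] conjI) auto
  next
    case F1: False
    show ?thesis
    proof (cases "\<exists>i<n. \<exists>j<n. Im (x $ i) \<noteq> Im (x $ j)")
      case True thus ?thesis using im by (intro exI[of _ "\<lambda>j. Im (x $ j)"] conjI) auto
    next
      case False
      have "x = x $ 0 \<cdot>\<^sub>v vec n (\<lambda>_. 1)"
      proof (rule eq_vecI)
        fix i assume "i < dim_vec (x $ 0 \<cdot>\<^sub>v vec n (\<lambda>_. 1))"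
        hence i: "i < n" by simp
        have "Re (x $ i) = Re (x $ 0)" using F1 i n by blast
        moreover have "Im (x $ i) = Im (x $ 0)" using False i n by blast
        ultimately have "x $ i = x $ 0" by (rule complex_eqI)
        thus "x $ i = (x $ 0 \<cdot>\<^sub>v vec n (\<lambda>_. 1)) $ i" using i by simp
      qed (use x in auto)
      with nm show ?thesis by blast
    qed
  qed
qed

end


locale fsg =
  fixes U :: "'a set" and \<alpha> :: "'a \<Rightarrow> 'a \<Rightarrow> real"
  assumes fs: "fully_supported U \<alpha>"
begin

definition xs where "xs = enum_set U"
definition nn where "nn = length xs"
definition p where "p = degree_fun U \<alpha>"
definition mm where "mm = (\<lambda>i j. \<alpha> (xs ! i) (xs ! j) / p (xs ! i))"
definition ww where "ww = (\<lambda>i. p (xs ! i))"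

lemma wf: "weight_fun U \<alpha>" using fs unfolding fully_supported_def by auto
lemma fin: "finite U" using wf unfolding weight_fun_def by auto
lemma alpha_out: "u \<notin> U \<or> u' \<notin> U \<Longrightarrow> \<alpha> u u' = 0" using wf unfolding weight_fun_def by auto
lemma alpha_nonneg: "\<alpha> u u' \<ge> 0" using wf unfolding weight_fun_def by auto
lemma alpha_sym: "\<alpha> u u' = \<alpha> u' u" using wf unfolding weight_fun_def by auto
lemma alpha_sum: "(\<Sum>u\<in>U. \<Sum>u'\<in>U. \<alpha> u u') = 1" using wf unfolding weight_fun_def by auto
lemma p_def': "p u = (\<Sum>u'\<in>U. \<alpha> u u')" unfolding p_def degree_fun_def ..
lemma p_pos: "u \<in> U \<Longrightarrow> p u > 0" using fs unfolding fully_supported_def p_def by auto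
lemma p_sum: "(\<Sum>u\<in>U. p u) = 1" unfolding p_def' by (rule alpha_sum)
lemma p_sym_sum: "(\<Sum>u\<in>U. \<alpha> u u') = p u'" unfolding p_def' by (intro sum.cong refl, rule alpha_sym)

lemma xs_prop: "distinct xs \<and> set xs = U"
proof -
  from finite_distinct_list[OF fin] obtain ys where "distinct ys \<and> set ys = U" by blast
  thus ?thesis unfolding xs_def enum_set_def by (rule someI)
qed
lemma xs_distinct: "distinct xs" and xs_set: "set xs = U" using xs_prop by auto
lemma xs_in: "i < nn \<Longrightarrow> xs ! i \<in> U"
proof -
  assume "i < nn"
  hence "xs ! i \<in> set xs" unfolding nn_def by (rule nth_mem)
  thus ?thesis unfolding xs_set .
qed

lemma sum_idx: "(\<Sum>u\<in>U. f u) = (\<Sum>i\<in>{0..<nn}. f (xs ! i))"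
proof -
  have b: "bij_betw ((!) xs) {0..<nn} U" by (rule bij_betw_nth[OF xs_distinct]) (auto simp: nn_def xs_set)
  show ?thesis by (rule sum.reindex_bij_betw[OF b, symmetric])
qed

definition idx where "idx u = (THE i. i < nn \<and> xs ! i = u)"
lemma idx_nth: "i < nn \<Longrightarrow> idx (xs ! i) = i"
  unfolding idx_def by (rule the_equality, auto simp: nn_def nth_eq_iff_index_eq[OF xs_distinct])
lemma idx: "u \<in> U \<Longrightarrow> idx u < nn \<and> xs ! idx u = u"
proof -
  assume "u \<in> U"
  hence "u \<in> set xs" using xs_set by simp
  then obtain i where i: "i < nn" "xs ! i = u" unfolding nn_def by (metis in_set_conv_nth)
  thus ?thesis using idx_nth by auto
qed

lemma n_pos: "nn > 0"
proof (rule ccontr)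
  assume "\<not> nn > 0"
  hence "U = {}" using xs_set unfolding nn_def by auto
  with p_sum show False by simp
qed

sublocale revm nn mm ww
proof
  fix i assume "i < nn" thus "ww i > 0" unfolding ww_def using p_pos xs_in by auto
next
  fix i j assume i: "i < nn" and j: "j < nn"
  have "p (xs ! i) > 0" "p (xs ! j) > 0" using p_pos xs_in i j by auto
  thus "ww i * mm i j = ww j * mm j i" unfolding ww_def mm_def using alpha_sym by simp
qed

lemma P_eq: "transition_mat U \<alpha> = M"
  unfolding transition_mat_def Let_def M_def unfolding mm_def nn_def xs_def p_def ..

definition one where "one = vec nn (\<lambda>_. (1::complex))"
lemma one_carrier: "one \<in> carrier_vec nn" unfolding one_def by simp
lemma one_nz: "one \<noteq> 0\<^sub>v nn"
proof
  assume "one = 0\<^sub>v nn"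
  hence "one $ 0 = 0\<^sub>v nn $ 0" by simp
  thus False using n_pos unfolding one_def by simp
qed

lemma mm_row_sum: "i < nn \<Longrightarrow> (\<Sum>j\<in>{0..<nn}. mm i j) = 1"
proof -
  assume i: "i < nn"
  have pp: "p (xs ! i) > 0" using p_pos xs_in i by auto
  have "(\<Sum>j\<in>{0..<nn}. mm i j) = (\<Sum>j\<in>{0..<nn}. \<alpha> (xs ! i) (xs ! j)) / p (xs ! i)"
    unfolding mm_def by (simp add: sum_divide_distrib)
  also have "(\<Sum>j\<in>{0..<nn}. \<alpha> (xs ! i) (xs ! j)) = p (xs ! i)" unfolding p_def' sum_idx ..
  finally show ?thesis using pp by simp
qed

lemma one_fixed: "M *\<^sub>v one = one"
proof (rule eq_vecI)
  fix i assume "i < dim_vec one"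
  hence i: "i < nn" unfolding one_def by simp
  have "(M *\<^sub>v one) $ i = (\<Sum>j\<in>{0..<nn}. complex_of_real (mm i j) * one $ j)" by (rule Mv_idx[OF one_carrier i])
  also have "\<dots> = complex_of_real (\<Sum>j\<in>{0..<nn}. mm i j)" unfolding one_def of_real_sum by (intro sum.cong refl) simp
  also have "\<dots> = one $ i" using mm_row_sum[OF i] i unfolding one_def by simp
  finally show "(M *\<^sub>v one) $ i = one $ i" .
qed (simp add: one_def)

lemma ev_one: "eigenvalue M 1"
  unfolding eigenvalue_def eigenvector_def using one_carrier one_nz one_fixed by auto

lemma alg_mult_pos: "alg_mult M 1 \<ge> 1"
proof -
  have "poly (char_poly M) 1 = 0" using ev_one eigenvalue_root_char_poly[OF M_carrier] by simp
  moreover have "char_poly M \<noteq> 0" using degree_monic_char_poly[OF M_carrier] by auto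
  ultimately show ?thesis unfolding alg_mult_def using order_root by (metis less_one not_le)
qed

end

context fsg begin

lemma conv_eig: assumes f: "\<forall>i<nn. (\<Sum>j\<in>{0..<nn}. mm i j * f j) = lam * f i"
  shows "\<forall>u\<in>U. (\<Sum>u'\<in>U. \<alpha> u u' * f (idx u')) = lam * p u * f (idx u)"
proof
  fix u assume u: "u \<in> U"
  define i where "i = idx u"
  have i: "i < nn" "xs ! i = u" using idx[OF u] unfolding i_def by auto
  have pp: "p u > 0" using p_pos[OF u] .
  have "(\<Sum>u'\<in>U. \<alpha> u u' * f (idx u')) = (\<Sum>j\<in>{0..<nn}. \<alpha> u (xs ! j) * f (idx (xs ! j)))" by (rule sum_idx)
  also have "\<dots> = (\<Sum>j\<in>{0..<nn}. p u * (mm i j * f j))"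
    using pp i by (intro sum.cong refl, auto simp: idx_nth mm_def)
  also have "\<dots> = p u * (lam * f i)" unfolding sum_distrib_left[symmetric] using f i by simp
  finally show "(\<Sum>u'\<in>U. \<alpha> u u' * f (idx u')) = lam * p u * f (idx u)" unfolding i_def by simp
qed

lemma eigfun: assumes "eigenvalue M c"
  shows "Im c = 0 \<and> (\<exists>F. (\<exists>u\<in>U. F u \<noteq> 0) \<and> (\<forall>u\<in>U. (\<Sum>u'\<in>U. \<alpha> u u' * F u') = Re c * p u * F u))"
proof -
  from assms obtain x where ev: "eigenvector M x c" unfolding eigenvalue_def by auto
  from real_eigvec[OF ev] obtain f where ic: "Im c = 0" and nz: "\<exists>i<nn. f i \<noteq> 0"
    and f: "\<forall>i<nn. (\<Sum>j\<in>{0..<nn}. mm i j * f j) = Re c * f i" by auto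
  from nz obtain i where i: "i < nn" "f i \<noteq> 0" by auto
  have "\<exists>u\<in>U. f (idx u) \<noteq> 0" using i xs_in[OF i(1)] idx_nth[OF i(1)] by metis
  with conv_eig[OF f] ic show ?thesis by (intro conjI exI[of _ "\<lambda>u. f (idx u)"]) auto
qed

lemma harm_nonconst: assumes "alg_mult M 1 \<ge> 2"
  shows "\<exists>F. (\<forall>u\<in>U. (\<Sum>u'\<in>U. \<alpha> u u' * F u') = p u * F u) \<and> (\<exists>u\<in>U. \<exists>u'\<in>U. F u \<noteq> F u')"
proof -
  from fixed_nonmultiple[OF assms[unfolded alg_mult_def] one_carrier] obtain x where
    x: "x \<in> carrier_vec nn" "M *\<^sub>v x = x" "\<forall>k. x \<noteq> k \<cdot>\<^sub>v one" by auto
  from real_fixed_nonconst[OF x(1,2) x(3)[unfolded one_def]] obtain f where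
    f: "\<forall>i<nn. (\<Sum>j\<in>{0..<nn}. mm i j * f j) = f i" and nc: "\<exists>i<nn. \<exists>j<nn. f i \<noteq> f j" by auto
  have f': "\<forall>i<nn. (\<Sum>j\<in>{0..<nn}. mm i j * f j) = 1 * f i" using f by simp
  from nc obtain i j where ij: "i < nn" "j < nn" "f i \<noteq> f j" by auto
  have "\<exists>u\<in>U. \<exists>u'\<in>U. f (idx u) \<noteq> f (idx u')"
    using ij xs_in[OF ij(1)] xs_in[OF ij(2)] idx_nth[OF ij(1)] idx_nth[OF ij(2)] by metis
  with conv_eig[OF f'] show ?thesis by (intro exI[of _ "\<lambda>u. f (idx u)"]) auto
qed

lemma fixed_const: assumes "alg_mult M 1 = 1" and x: "x \<in> carrier_vec nn" "M *\<^sub>v x = x"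
  shows "\<exists>k. \<forall>i<nn. x $ i = k"
proof -
  from fixed_multiple[OF assms(1)[unfolded alg_mult_def] x one_carrier one_fixed one_nz]
  obtain k where "x = k \<cdot>\<^sub>v one" by auto
  thus ?thesis unfolding one_def by auto
qed

end
context fsg begin

lemma eig_sum_zero: assumes F: "\<forall>u\<in>U. (\<Sum>u'\<in>U. \<alpha> u u' * F u') = lam * p u * F u" and l: "lam \<noteq> 1"
  shows "(\<Sum>u\<in>U. p u * F u) = 0"
proof -
  have "lam * (\<Sum>u\<in>U. p u * F u) = (\<Sum>u\<in>U. \<Sum>u'\<in>U. \<alpha> u u' * F u')"
    unfolding sum_distrib_left using F by (intro sum.cong refl) (simp add: mult_ac)
  also have "\<dots> = (\<Sum>u'\<in>U. \<Sum>u\<in>U. \<alpha> u u' * F u')" by (rule sum.swap)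
  also have "\<dots> = (\<Sum>u'\<in>U. p u' * F u')"
    by (intro sum.cong refl) (simp add: sum_distrib_right[symmetric] p_sym_sum)
  finally have "(lam - 1) * (\<Sum>u\<in>U. p u * F u) = 0" by (simp add: algebra_simps)
  with l show ?thesis by simp
qed

lemma center: assumes F: "\<forall>u\<in>U. (\<Sum>u'\<in>U. \<alpha> u u' * F u') = p u * F u"
  and u12: "u1 \<in> U" "u2 \<in> U" "F u1 \<noteq> F u2"
  shows "\<exists>F'. (\<forall>u\<in>U. (\<Sum>u'\<in>U. \<alpha> u u' * F' u') = 1 * p u * F' u) \<and> (\<Sum>u\<in>U. p u * F' u) = 0 \<and> (\<exists>u\<in>U. F' u \<noteq> 0)"
proof -
  define c where "c = (\<Sum>u\<in>U. p u * F u)"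
  define F' where "F' = (\<lambda>u. F u - c)"
  have 1: "\<forall>u\<in>U. (\<Sum>u'\<in>U. \<alpha> u u' * F' u') = 1 * p u * F' u"
  proof
    fix u assume u: "u \<in> U"
    have "(\<Sum>u'\<in>U. \<alpha> u u' * F' u') = (\<Sum>u'\<in>U. \<alpha> u u' * F u') - c * (\<Sum>u'\<in>U. \<alpha> u u')"
      unfolding F'_def by (simp add: algebra_simps sum_subtractf sum_distrib_left)
    also have "\<dots> = p u * F u - c * p u" using F u unfolding p_def' by simp
    finally show "(\<Sum>u'\<in>U. \<alpha> u u' * F' u') = 1 * p u * F' u" unfolding F'_def by (simp add: algebra_simps)
  qed
  have 2: "(\<Sum>u\<in>U. p u * F' u) = 0"
  proof -
    have "(\<Sum>u\<in>U. p u * F' u) = (\<Sum>u\<in>U. p u * F u - p u * c)"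
      unfolding F'_def by (intro sum.cong refl) (simp add: right_diff_distrib)
    also have "\<dots> = c - (\<Sum>u\<in>U. p u) * c" unfolding sum_subtractf c_def sum_distrib_right ..
    finally show ?thesis using p_sum by simp
  qed
  have 3: "\<exists>u\<in>U. F' u \<noteq> 0" using u12 unfolding F'_def by (metis eq_iff_diff_eq_0)
  show ?thesis using 1 2 3 by blast
qed

lemma edge: assumes F: "\<forall>u\<in>U. (\<Sum>u'\<in>U. \<alpha> u u' * F u') = lam * p u * F u" and l: "lam^2 = 1"
  and u: "u \<in> U" "u' \<in> U" and a: "\<alpha> u u' \<noteq> 0"
  shows "F u' = lam * F u"
proof -
  define S where "S = (\<Sum>u\<in>U. p u * (F u)^2)"
  have "(\<Sum>x\<in>U. \<Sum>y\<in>U. \<alpha> x y * (F y - lam * F x)^2)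
     = (\<Sum>x\<in>U. \<Sum>y\<in>U. \<alpha> x y * (F y)^2) - 2 * lam * (\<Sum>x\<in>U. F x * (\<Sum>y\<in>U. \<alpha> x y * F y))
       + lam^2 * (\<Sum>x\<in>U. (F x)^2 * (\<Sum>y\<in>U. \<alpha> x y))"
    by (simp add: power2_eq_square algebra_simps sum.distrib sum_subtractf sum_distrib_left)
  also have "(\<Sum>x\<in>U. \<Sum>y\<in>U. \<alpha> x y * (F y)^2) = S"
  proof -
    have "(\<Sum>x\<in>U. \<Sum>y\<in>U. \<alpha> x y * (F y)^2) = (\<Sum>y\<in>U. \<Sum>x\<in>U. \<alpha> x y * (F y)^2)" by (rule sum.swap)
    also have "\<dots> = S" unfolding S_def
      by (intro sum.cong refl) (simp add: sum_distrib_right[symmetric] p_sym_sum)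
    finally show ?thesis .
  qed
  also have "(\<Sum>x\<in>U. F x * (\<Sum>y\<in>U. \<alpha> x y * F y)) = (\<Sum>x\<in>U. lam * (p x * (F x)^2))"
  proof (intro sum.cong refl)
    fix x assume x: "x \<in> U"
    have "(\<Sum>y\<in>U. \<alpha> x y * F y) = lam * p x * F x" using F x by blast
    thus "F x * (\<Sum>y\<in>U. \<alpha> x y * F y) = lam * (p x * (F x)^2)" by (simp add: power2_eq_square)
  qed
  also have "\<dots> = lam * S" unfolding S_def sum_distrib_left ..
  also have "(\<Sum>x\<in>U. (F x)^2 * (\<Sum>y\<in>U. \<alpha> x y)) = S"
    unfolding S_def p_def' by (simp add: mult_ac)
  finally have tot: "(\<Sum>x\<in>U. \<Sum>y\<in>U. \<alpha> x y * (F y - lam * F x)^2) = 0"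
    using l by (simp add: algebra_simps power2_eq_square)
  have nn: "\<And>x y. 0 \<le> \<alpha> x y * (F y - lam * F x)^2" using alpha_nonneg by simp
  have inn: "\<And>x. x \<in> U \<Longrightarrow> 0 \<le> (\<Sum>y\<in>U. \<alpha> x y * (F y - lam * F x)^2)"
    by (rule sum_nonneg, rule nn)
  have "\<forall>x\<in>U. (\<Sum>y\<in>U. \<alpha> x y * (F y - lam * F x)^2) = 0"
    by (rule iffD1[OF sum_nonneg_eq_0_iff[OF fin inn] tot])
  hence "(\<Sum>y\<in>U. \<alpha> u y * (F y - lam * F u)^2) = 0" using u(1) by blast
  hence "\<forall>y\<in>U. \<alpha> u y * (F y - lam * F u)^2 = 0" by (rule iffD1[OF sum_nonneg_eq_0_iff[OF fin nn]])
  hence "\<alpha> u u' * (F u' - lam * F u)^2 = 0" using u(2) by blast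
  with a show ?thesis by simp
qed

end


lemma sum_pair: "(\<Sum>y\<in>A\<times>B. f y) = (\<Sum>a\<in>A. \<Sum>b\<in>B. f (a,b))"
  by (simp add: sum.cartesian_product)

lemma joining_construct:
  fixes U :: "'a set" and \<alpha> and V :: "'b set" and \<beta> and F :: "'a \<Rightarrow> real" and Gf :: "'b \<Rightarrow> real"
  assumes fsU: "fully_supported U \<alpha>" and fsV: "fully_supported V \<beta>"
  and eF: "\<forall>u\<in>U. (\<Sum>u'\<in>U. \<alpha> u u' * F u') = lam * degree_fun U \<alpha> u * F u"
  and eG: "\<forall>v\<in>V. (\<Sum>v'\<in>V. \<beta> v v' * Gf v') = lam * degree_fun V \<beta> v * Gf v"
  and sF: "(\<Sum>u\<in>U. degree_fun U \<alpha> u * F u) = 0" and sG: "(\<Sum>v\<in>V. degree_fun V \<beta> v * Gf v) = 0"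
  and edF: "\<forall>u\<in>U. \<forall>u'\<in>U. \<alpha> u u' \<noteq> 0 \<longrightarrow> (lam - t) * F u' = (lam - t) * lam * F u"
  and edG: "\<forall>v\<in>V. \<forall>v'\<in>V. \<beta> v v' \<noteq> 0 \<longrightarrow> (lam - t) * Gf v' = (lam - t) * lam * Gf v"
  and kap: "1 + lam^2 - 2*t*lam \<noteq> 0"
  and u0: "u0 \<in> U" "F u0 \<noteq> 0" and v0: "v0 \<in> V" "Gf v0 \<noteq> 0"
  shows "\<not> weakly_disjoint U \<alpha> V \<beta>"
proof
  assume wd: "weakly_disjoint U \<alpha> V \<beta>"
  interpret G: fsg U \<alpha> by (unfold_locales, rule fsU)
  interpret H: fsg V \<beta> by (unfold_locales, rule fsV)
  define p where "p = degree_fun U \<alpha>"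
  define q where "q = degree_fun V \<beta>"
  have pG: "p = G.p" unfolding p_def G.p_def ..
  have qH: "q = H.p" unfolding q_def H.p_def ..
  have p_def': "\<And>u. p u = (\<Sum>u'\<in>U. \<alpha> u u')" unfolding pG by (rule G.p_def')
  have q_def': "\<And>v. q v = (\<Sum>v'\<in>V. \<beta> v v')" unfolding qH by (rule H.p_def')
  have psum: "(\<Sum>u\<in>U. p u) = 1" unfolding pG by (rule G.p_sum)
  have qsum: "(\<Sum>v\<in>V. q v) = 1" unfolding qH by (rule H.p_sum)
  have ppos: "\<And>u. u \<in> U \<Longrightarrow> p u > 0" unfolding pG by (rule G.p_pos)
  have qpos: "\<And>v. v \<in> V \<Longrightarrow> q v > 0" unfolding qH by (rule H.p_pos)
  note eF = eF[folded p_def] and eG = eG[folded q_def] and sF = sF[folded p_def] and sG = sG[folded q_def]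
  define h :: "'a \<times> 'b \<Rightarrow> 'a \<times> 'b \<Rightarrow> real" where
    "h x y = F (fst x) * Gf (snd x) + F (fst y) * Gf (snd y) - t * (F (fst x) * Gf (snd y) + F (fst y) * Gf (snd x))" for x y
  define B where "B = 1 + (\<Sum>x\<in>U\<times>V. \<Sum>y\<in>U\<times>V. \<bar>h x y\<bar>)"
  define eps where "eps = 1 / B"
  define \<gamma> where "\<gamma> x y = \<alpha> (fst x) (fst y) * \<beta> (snd x) (snd y) * (1 + eps * h x y)" for x y
  define \<kappa> where "\<kappa> = 1 + lam^2 - 2*t*lam"
  define R where "R u v = p u * q v * (1 + eps * \<kappa> * F u * Gf v)" for u v
  have finUV: "finite (U \<times> V)" using G.fin H.fin by simp
  have B1: "B \<ge> 1" unfolding B_def by (simp add: sum_nonneg)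
  have eps: "eps > 0" unfolding eps_def using B1 by simp
  have hsym: "h x y = h y x" for x y unfolding h_def by (simp add: algebra_simps)
  have hb: "1 + eps * h x y \<ge> 0" if x: "x \<in> U\<times>V" and y: "y \<in> U\<times>V" for x y
  proof -
    have "\<bar>h x y\<bar> \<le> (\<Sum>y\<in>U\<times>V. \<bar>h x y\<bar>)" by (rule member_le_sum[OF y], auto simp: finUV)
    also have "\<dots> \<le> (\<Sum>x\<in>U\<times>V. \<Sum>y\<in>U\<times>V. \<bar>h x y\<bar>)"
      by (rule member_le_sum[OF x, of "\<lambda>x. \<Sum>y\<in>U\<times>V. \<bar>h x y\<bar>"], auto simp: finUV sum_nonneg)
    finally have "\<bar>h x y\<bar> \<le> B - 1" unfolding B_def by simp
    hence "\<bar>eps * h x y\<bar> \<le> (B - 1) / B" unfolding eps_def using B1 by (simp add: abs_mult divide_right_mono)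
    also have "\<dots> \<le> 1" using B1 by simp
    finally show ?thesis by linarith
  qed
  have IV: "(\<Sum>v'\<in>V. \<beta> v v' * (1 + eps * h (u,v) (u',v'))) = q v + eps * q v * Gf v * (F u * (1 - t*lam) + F u' * (lam - t))"
    if v: "v \<in> V" for u v u'
  proof -
    have "(\<Sum>v'\<in>V. \<beta> v v' * (1 + eps * h (u,v) (u',v'))) =
      (\<Sum>v'\<in>V. \<beta> v v' * (1 + eps * (F u * Gf v - t * F u' * Gf v)) + eps * (F u' - t * F u) * (\<beta> v v' * Gf v'))"
      unfolding h_def by (intro sum.cong refl) (simp add: algebra_simps)
    also have "\<dots> = q v * (1 + eps * (F u * Gf v - t * F u' * Gf v)) + eps * (F u' - t * F u) * (lam * q v * Gf v)"
      unfolding sum.distrib sum_distrib_left[symmetric] sum_distrib_right[symmetric] q_def'[symmetric] using eG v by simp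
    finally show ?thesis by (simp add: algebra_simps)
  qed
  have IU: "(\<Sum>u'\<in>U. \<alpha> u u' * (1 + eps * h (u,v) (u',v'))) = p u + eps * p u * F u * (Gf v * (1 - t*lam) + Gf v' * (lam - t))"
    if u: "u \<in> U" for u v v'
  proof -
    have "(\<Sum>u'\<in>U. \<alpha> u u' * (1 + eps * h (u,v) (u',v'))) =
      (\<Sum>u'\<in>U. \<alpha> u u' * (1 + eps * (F u * Gf v - t * F u * Gf v')) + eps * (Gf v' - t * Gf v) * (\<alpha> u u' * F u'))"
      unfolding h_def by (intro sum.cong refl) (simp add: algebra_simps)
    also have "\<dots> = p u * (1 + eps * (F u * Gf v - t * F u * Gf v')) + eps * (Gf v' - t * Gf v) * (lam * p u * F u)"
      unfolding sum.distrib sum_distrib_left[symmetric] sum_distrib_right[symmetric] p_def'[symmetric] using eF u by simp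
    finally show ?thesis by (simp add: algebra_simps)
  qed
  have rowV: "(\<Sum>v'\<in>V. \<gamma> (u,v) (u',v')) = \<alpha> u u' * (q v + eps * q v * Gf v * (F u * (1 - t*lam) + F u' * (lam - t)))"
    if v: "v \<in> V" for u v u'
    unfolding \<gamma>_def IV[OF v, symmetric] sum_distrib_left by (intro sum.cong refl) (simp add: mult_ac)
  have rowU: "(\<Sum>u'\<in>U. \<gamma> (u,v) (u',v')) = \<beta> v v' * (p u + eps * p u * F u * (Gf v * (1 - t*lam) + Gf v' * (lam - t)))"
    if u: "u \<in> U" for u v v'
    unfolding \<gamma>_def IU[OF u, symmetric] sum_distrib_left by (intro sum.cong refl) (simp add: mult_ac)
  have deg: "degree_fun (U\<times>V) \<gamma> (u,v) = R u v" if u: "u \<in> U" and v: "v \<in> V" for u v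
  proof -
    have "degree_fun (U\<times>V) \<gamma> (u,v) = (\<Sum>u'\<in>U. \<Sum>v'\<in>V. \<gamma> (u,v) (u',v'))" unfolding degree_fun_def sum_pair ..
    also have "\<dots> = (\<Sum>u'\<in>U. \<alpha> u u' * (q v + eps * q v * Gf v * F u * (1 - t*lam)) + (eps * q v * Gf v * (lam - t)) * (\<alpha> u u' * F u'))"
      using rowV[OF v] by (intro sum.cong refl) (simp add: algebra_simps)
    also have "\<dots> = p u * (q v + eps * q v * Gf v * F u * (1 - t*lam)) + (eps * q v * Gf v * (lam - t)) * (lam * p u * F u)"
      unfolding sum.distrib sum_distrib_left[symmetric] sum_distrib_right[symmetric] p_def'[symmetric] using eF u by simp
    also have "\<dots> = R u v" unfolding R_def \<kappa>_def by (simp add: algebra_simps power2_eq_square)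
    finally show ?thesis .
  qed
  have margU: "(\<Sum>v\<in>V. R u v) = p u" for u
  proof -
    have "(\<Sum>v\<in>V. R u v) = p u * (\<Sum>v\<in>V. q v) + eps * \<kappa> * p u * F u * (\<Sum>v\<in>V. q v * Gf v)"
      unfolding R_def by (simp add: algebra_simps sum.distrib sum_distrib_left)
    thus ?thesis using qsum sG by simp
  qed
  have margV: "(\<Sum>u\<in>U. R u v) = q v" for v
  proof -
    have "(\<Sum>u\<in>U. R u v) = q v * (\<Sum>u\<in>U. p u) + eps * \<kappa> * q v * Gf v * (\<Sum>u\<in>U. p u * F u)"
      unfolding R_def by (simp add: algebra_simps sum.distrib sum_distrib_left)
    thus ?thesis using psum sF by simp
  qed
  have wj: "weight_joining U \<alpha> V \<beta> \<gamma>"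
    unfolding weight_joining_def
  proof (intro conjI ballI)
    show "weight_fun (U \<times> V) \<gamma>" unfolding weight_fun_def
    proof (intro conjI allI impI)
      show "finite (U \<times> V)" by (rule finUV)
    next
      fix x y assume "x \<notin> U \<times> V \<or> y \<notin> U \<times> V"
      hence "\<alpha> (fst x) (fst y) = 0 \<or> \<beta> (snd x) (snd y) = 0"
        using G.alpha_out H.alpha_out by (cases x, cases y, auto)
      thus "\<gamma> x y = 0" unfolding \<gamma>_def by auto
    next
      fix x y
      show "\<gamma> x y \<ge> 0"
      proof (cases "x \<in> U \<times> V \<and> y \<in> U \<times> V")
        case True thus ?thesis unfolding \<gamma>_def using hb G.alpha_nonneg H.alpha_nonneg by auto
      next
        case False
        hence "\<alpha> (fst x) (fst y) = 0 \<or> \<beta> (snd x) (snd y) = 0"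
          using G.alpha_out H.alpha_out by (cases x, cases y, auto)
        thus ?thesis unfolding \<gamma>_def by auto
      qed
    next
      fix x y show "\<gamma> x y = \<gamma> y x" unfolding \<gamma>_def using G.alpha_sym H.alpha_sym hsym by metis
    next
      have "(\<Sum>x\<in>U \<times> V. \<Sum>y\<in>U \<times> V. \<gamma> x y) = (\<Sum>x\<in>U \<times> V. degree_fun (U\<times>V) \<gamma> x)" unfolding degree_fun_def ..
      also have "\<dots> = (\<Sum>u\<in>U. \<Sum>v\<in>V. R u v)" unfolding sum_pair using deg by simp
      also have "\<dots> = (\<Sum>u\<in>U. p u)" using margU by simp
      finally show "(\<Sum>x\<in>U \<times> V. \<Sum>y\<in>U \<times> V. \<gamma> x y) = 1" using psum by simp
    qed
  next
    fix u assume u: "u \<in> U"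
    show "(\<Sum>v\<in>V. degree_fun (U \<times> V) \<gamma> (u, v)) = degree_fun U \<alpha> u"
      using deg[OF u] margU[of u] unfolding p_def by simp
  next
    fix v assume v: "v \<in> V"
    show "(\<Sum>u\<in>U. degree_fun (U \<times> V) \<gamma> (u, v)) = degree_fun V \<beta> v"
      using deg[OF _ v] margV[of v] unfolding q_def by simp
  next
    fix u u' v assume u: "u \<in> U" and u': "u' \<in> U" and v: "v \<in> V"
    show "degree_fun U \<alpha> u * (\<Sum>v'\<in>V. \<gamma> (u, v) (u', v')) = \<alpha> u u' * degree_fun (U \<times> V) \<gamma> (u, v)"
    proof (cases "\<alpha> u u' = 0")
      case True thus ?thesis unfolding rowV[OF v] by simp
    next
      case False
      with edF u u' have e: "(lam - t) * F u' = (lam - t) * lam * F u" by blast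
      have e': "F u' * (lam - t) = (lam - t) * lam * F u" using e by (simp add: mult.commute)
      have "p u * (q v + eps * q v * Gf v * (F u * (1 - t*lam) + F u' * (lam - t))) = R u v"
        unfolding e' R_def \<kappa>_def by (simp add: algebra_simps power2_eq_square)
      thus ?thesis unfolding rowV[OF v] deg[OF u v] p_def[symmetric] by (simp add: mult_ac)
    qed
  next
    fix u v v' assume u: "u \<in> U" and v: "v \<in> V" and v': "v' \<in> V"
    show "degree_fun V \<beta> v * (\<Sum>u'\<in>U. \<gamma> (u, v) (u', v')) = \<beta> v v' * degree_fun (U \<times> V) \<gamma> (u, v)"
    proof (cases "\<beta> v v' = 0")
      case True thus ?thesis unfolding rowU[OF u] by simp
    next
      case False
      with edG v v' have e: "(lam - t) * Gf v' = (lam - t) * lam * Gf v" by blast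
      have e': "Gf v' * (lam - t) = (lam - t) * lam * Gf v" using e by (simp add: mult.commute)
      have "q v * (p u + eps * p u * F u * (Gf v * (1 - t*lam) + Gf v' * (lam - t))) = R u v"
        unfolding e' R_def \<kappa>_def by (simp add: algebra_simps power2_eq_square)
      thus ?thesis unfolding rowU[OF u] deg[OF u v] q_def[symmetric] by (simp add: mult_ac)
    qed
  qed
  from wd wj u0(1) v0(1) have "degree_fun (U\<times>V) \<gamma> (u0,v0) = p u0 * q v0"
    unfolding weakly_disjoint_def p_def q_def by blast
  hence "R u0 v0 = p u0 * q v0" using deg[OF u0(1) v0(1)] by simp
  hence "p u0 * q v0 * (eps * \<kappa> * F u0 * Gf v0) = 0" unfolding R_def by (simp add: algebra_simps)
  moreover have "\<kappa> \<noteq> 0" unfolding \<kappa>_def by (rule kap)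
  ultimately show False using ppos[OF u0(1)] qpos[OF v0(1)] eps u0(2) v0(2) by simp
qed


lemma joining_identity:
  assumes fsU: "fully_supported U \<alpha>" and fsV: "fully_supported V \<beta>"
    and wj: "weight_joining U \<alpha> V \<beta> \<gamma>" and u: "u \<in> U" and v: "v \<in> V"
  shows "(\<Sum>u'\<in>U. \<alpha> u u' * degree_fun (U\<times>V) \<gamma> (u',v) / degree_fun U \<alpha> u')
       = (\<Sum>v'\<in>V. \<beta> v v' * degree_fun (U\<times>V) \<gamma> (u,v') / degree_fun V \<beta> v')"
proof -
  interpret G: fsg U \<alpha> by (unfold_locales, rule fsU)
  interpret H: fsg V \<beta> by (unfold_locales, rule fsV)
  define r where "r = degree_fun (U\<times>V) \<gamma>"
  from wj have wf: "weight_fun (U\<times>V) \<gamma>"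
    and cU: "\<forall>u\<in>U. \<forall>u'\<in>U. \<forall>v\<in>V. degree_fun U \<alpha> u * (\<Sum>v'\<in>V. \<gamma> (u, v) (u', v')) = \<alpha> u u' * r (u, v)"
    and cV: "\<forall>u\<in>U. \<forall>v\<in>V. \<forall>v'\<in>V. degree_fun V \<beta> v * (\<Sum>u'\<in>U. \<gamma> (u, v) (u', v')) = \<beta> v v' * r (u, v)"
    unfolding weight_joining_def r_def by auto
  have gs: "\<forall>x y. \<gamma> x y = \<gamma> y x" using wf unfolding weight_fun_def by (elim conjE) assumption
  have gsym: "\<gamma> x y = \<gamma> y x" for x y using gs by blast
  have "(\<Sum>u'\<in>U. \<Sum>v'\<in>V. \<gamma> (u',v) (u,v')) = (\<Sum>u'\<in>U. \<alpha> u u' * r (u',v) / degree_fun U \<alpha> u')"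
  proof (intro sum.cong refl)
    fix u' assume u': "u' \<in> U"
    have pp: "degree_fun U \<alpha> u' > 0" using G.p_pos[OF u'] unfolding G.p_def .
    have "degree_fun U \<alpha> u' * (\<Sum>v'\<in>V. \<gamma> (u',v) (u,v')) = \<alpha> u' u * r (u',v)" using cU u u' v by blast
    thus "(\<Sum>v'\<in>V. \<gamma> (u',v) (u,v')) = \<alpha> u u' * r (u',v) / degree_fun U \<alpha> u'"
      using pp G.alpha_sym[of u' u] by (simp add: field_simps)
  qed
  moreover have "(\<Sum>u'\<in>U. \<Sum>v'\<in>V. \<gamma> (u',v) (u,v')) = (\<Sum>v'\<in>V. \<beta> v v' * r (u,v') / degree_fun V \<beta> v')"
  proof -
    have "(\<Sum>u'\<in>U. \<Sum>v'\<in>V. \<gamma> (u',v) (u,v')) = (\<Sum>v'\<in>V. \<Sum>u'\<in>U. \<gamma> (u,v') (u',v))"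
      by (subst sum.swap, intro sum.cong refl, rule gsym)
    also have "\<dots> = (\<Sum>v'\<in>V. \<beta> v v' * r (u,v') / degree_fun V \<beta> v')"
    proof (intro sum.cong refl)
      fix v' assume v': "v' \<in> V"
      have qq: "degree_fun V \<beta> v' > 0" using H.p_pos[OF v'] unfolding H.p_def .
      have "degree_fun V \<beta> v' * (\<Sum>u'\<in>U. \<gamma> (u,v') (u',v)) = \<beta> v' v * r (u,v')" using cV u v v' by blast
      thus "(\<Sum>u'\<in>U. \<gamma> (u,v') (u',v)) = \<beta> v v' * r (u,v') / degree_fun V \<beta> v'"
        using qq H.alpha_sym[of v' v] by (simp add: field_simps)
    qed
    finally show ?thesis .
  qed
  ultimately show ?thesis unfolding r_def by simp
qed

lemma wd_of_spec:
  assumes fsU: "fully_supported U \<alpha>" and fsV: "fully_supported V \<beta>"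
    and common: "\<forall>c. eigenvalue (transition_mat U \<alpha>) c \<and> eigenvalue (transition_mat V \<beta>) c \<longrightarrow> c = 1"
    and one: "alg_mult (transition_mat U \<alpha>) 1 = 1 \<or> alg_mult (transition_mat V \<beta>) 1 = 1"
  shows "weakly_disjoint U \<alpha> V \<beta>"
  unfolding weakly_disjoint_def
proof (intro allI impI ballI)
  fix \<gamma> u v assume wj: "weight_joining U \<alpha> V \<beta> \<gamma>" and u: "u \<in> U" and v: "v \<in> V"
  interpret G: fsg U \<alpha> by (unfold_locales, rule fsU)
  interpret H: fsg V \<beta> by (unfold_locales, rule fsV)
  define r where "r = degree_fun (U\<times>V) \<gamma>"
  define p where "p = degree_fun U \<alpha>"
  define q where "q = degree_fun V \<beta>"
  have pG: "p = G.p" unfolding p_def G.p_def ..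
  have qH: "q = H.p" unfolding q_def H.p_def ..
  have ppos: "\<And>u. u \<in> U \<Longrightarrow> p u > 0" unfolding pG by (rule G.p_pos)
  have qpos: "\<And>v. v \<in> V \<Longrightarrow> q v > 0" unfolding qH by (rule H.p_pos)
  from wj have mU: "\<forall>u\<in>U. (\<Sum>v\<in>V. r (u, v)) = p u" and mV: "\<forall>v\<in>V. (\<Sum>u\<in>U. r (u, v)) = q v"
    unfolding weight_joining_def r_def p_def q_def by auto
  have ident: "(\<Sum>u'\<in>U. \<alpha> u u' * r (u',v) / p u') = (\<Sum>v'\<in>V. \<beta> v v' * r (u,v') / q v')"
    if "u \<in> U" "v \<in> V" for u v
    using joining_identity[OF fsU fsV wj that] unfolding r_def p_def q_def .
  let ?n = G.nn let ?k = H.nn let ?x = G.xs let ?y = H.xs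
  define Z where "Z = mat ?n ?k (\<lambda>(i,j). complex_of_real (r (?x ! i, ?y ! j) / (p (?x ! i) * q (?y ! j))))"
  have Z: "Z \<in> carrier_mat ?n ?k" unfolding Z_def by simp
  have Zij: "Z $$ (i,j) = complex_of_real (r (?x ! i, ?y ! j) / (p (?x ! i) * q (?y ! j)))" if "i < ?n" "j < ?k" for i j
    unfolding Z_def using that by simp
  have PZ: "G.M * Z = Z * transpose_mat H.M"
  proof (rule eq_matI)
    fix i j assume "i < dim_row (Z * transpose_mat H.M)" and "j < dim_col (Z * transpose_mat H.M)"
    hence i: "i < ?n" and j: "j < ?k" using Z by auto
    have xi: "?x ! i \<in> U" using G.xs_in[OF i] .
    have yj: "?y ! j \<in> V" using H.xs_in[OF j] .
    have "(G.M * Z) $$ (i,j) = (\<Sum>l\<in>{0..<?n}. G.M $$ (i,l) * Z $$ (l,j))"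
      using i j Z by (auto simp: scalar_prod_def intro!: sum.cong)
    also have "\<dots> = (\<Sum>l\<in>{0..<?n}. complex_of_real (\<alpha> (?x ! i) (?x ! l) * r (?x ! l, ?y ! j) / p (?x ! l) / (p (?x ! i) * q (?y ! j))))"
    proof (intro sum.cong refl)
      fix l assume "l \<in> {0..<?n}"
      hence l: "l < ?n" by simp
      have "G.M $$ (i,l) = complex_of_real (G.mm i l)" unfolding G.M_def using i l by simp
      thus "G.M $$ (i,l) * Z $$ (l,j) = complex_of_real (\<alpha> (?x ! i) (?x ! l) * r (?x ! l, ?y ! j) / p (?x ! l) / (p (?x ! i) * q (?y ! j)))"
        unfolding Zij[OF l j] G.mm_def pG[symmetric] of_real_mult[symmetric] by (simp add: field_simps)
    qed
    also have "\<dots> = complex_of_real ((\<Sum>u'\<in>U. \<alpha> (?x ! i) u' * r (u', ?y ! j) / p u') / (p (?x ! i) * q (?y ! j)))"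
      unfolding of_real_sum[symmetric] G.sum_idx sum_divide_distrib ..
    also have "\<dots> = complex_of_real ((\<Sum>v'\<in>V. \<beta> (?y ! j) v' * r (?x ! i, v') / q v') / (p (?x ! i) * q (?y ! j)))"
      unfolding ident[OF xi yj] ..
    also have "\<dots> = (\<Sum>l\<in>{0..<?k}. complex_of_real (\<beta> (?y ! j) (?y ! l) * r (?x ! i, ?y ! l) / q (?y ! l) / (p (?x ! i) * q (?y ! j))))"
      unfolding of_real_sum[symmetric] H.sum_idx sum_divide_distrib ..
    also have "\<dots> = (\<Sum>l\<in>{0..<?k}. Z $$ (i,l) * transpose_mat H.M $$ (l,j))"
    proof (intro sum.cong refl)
      fix l assume "l \<in> {0..<?k}"
      hence l: "l < ?k" by simp
      have "transpose_mat H.M $$ (l,j) = complex_of_real (H.mm j l)" unfolding H.M_def using j l by simp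
      thus "complex_of_real (\<beta> (?y ! j) (?y ! l) * r (?x ! i, ?y ! l) / q (?y ! l) / (p (?x ! i) * q (?y ! j))) = Z $$ (i,l) * transpose_mat H.M $$ (l,j)"
        unfolding Zij[OF i l] H.mm_def qH[symmetric] of_real_mult[symmetric] by (simp add: field_simps)
    qed
    also have "\<dots> = (Z * transpose_mat H.M) $$ (i,j)"
      using i j Z by (auto simp: scalar_prod_def intro!: sum.cong)
    finally show "(G.M * Z) $$ (i,j) = (Z * transpose_mat H.M) $$ (i,j)" .
  qed (use Z in auto)
  have commonGH: "\<And>c. eigenvalue G.M c \<Longrightarrow> eigenvalue H.M c \<Longrightarrow> c = 1"
    using common unfolding G.P_eq H.P_eq by blast
  have commonHG: "\<And>c. eigenvalue H.M c \<Longrightarrow> eigenvalue G.M c \<Longrightarrow> c = 1"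
    using commonGH by blast
  have HM: "H.M \<in> carrier_mat ?k ?k" by simp
  have GM: "G.M \<in> carrier_mat ?n ?n" by simp
  have ZT: "transpose_mat Z \<in> carrier_mat ?k ?n" using Z by simp
  have rowsfix: "Z * transpose_mat H.M = Z" by (rule G.sylvester[OF HM Z PZ commonGH])
  have PZT: "H.M * transpose_mat Z = transpose_mat Z * transpose_mat G.M"
  proof -
    have "transpose_mat (G.M * Z) = transpose_mat (Z * transpose_mat H.M)" unfolding PZ ..
    thus ?thesis using transpose_mult[OF GM Z] transpose_mult[OF Z, of "transpose_mat H.M" ?k] HM by simp
  qed
  have colsfix': "transpose_mat Z * transpose_mat G.M = transpose_mat Z" by (rule H.sylvester[OF GM ZT PZT commonHG])
  have colsfix: "G.M * Z = Z"
  proof -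
    have "transpose_mat (transpose_mat Z * transpose_mat G.M) = transpose_mat (transpose_mat Z)" unfolding colsfix' ..
    thus ?thesis using transpose_mult[OF ZT, of "transpose_mat G.M" ?n] GM by simp
  qed
  have rowsfix2: "H.M * transpose_mat Z = transpose_mat Z"
  proof -
    have "transpose_mat (Z * transpose_mat H.M) = transpose_mat Z" unfolding rowsfix ..
    thus ?thesis using transpose_mult[OF Z, of "transpose_mat H.M" ?k] HM by simp
  qed
  have Re_Z: "Re (Z $$ (i,j)) = r (?x ! i, ?y ! j) / (p (?x ! i) * q (?y ! j))" if "i < ?n" "j < ?k" for i j
    using Zij[OF that] by simp
  from one show "degree_fun (U \<times> V) \<gamma> (u, v) = degree_fun U \<alpha> u * degree_fun V \<beta> v"
  proof
    assume o: "alg_mult (transition_mat U \<alpha>) 1 = 1"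
    define j where "j = H.idx v"
    have j: "j < ?k" "?y ! j = v" using H.idx[OF v] unfolding j_def by auto
    have cf: "G.M *\<^sub>v col Z j = col Z j" using col_mult2[OF GM Z j(1)] colsfix by simp
    from G.fixed_const[OF o[unfolded G.P_eq] _ cf] Z j obtain c where c: "\<forall>i<?n. col Z j $ i = c" by auto
    have rc: "r (u', v) = Re c * p u' * q v" if u': "u' \<in> U" for u'
    proof -
      define i where "i = G.idx u'"
      have i: "i < ?n" "?x ! i = u'" using G.idx[OF u'] unfolding i_def by auto
      have "Re (Z $$ (i,j)) = Re c" using c i j Z by auto
      hence "r (u', v) / (p u' * q v) = Re c" using Re_Z[OF i(1) j(1)] i j by simp
      thus ?thesis using ppos[OF u'] qpos[OF v] by (simp add: field_simps)
    qed
    have "q v = (\<Sum>u'\<in>U. r (u', v))" using mV v by simp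
    also have "\<dots> = Re c * q v * (\<Sum>u'\<in>U. p u')" unfolding sum_distrib_left by (intro sum.cong refl) (simp add: rc)
    also have "(\<Sum>u'\<in>U. p u') = 1" unfolding pG by (rule G.p_sum)
    finally have "Re c = 1" using qpos[OF v] by simp
    thus ?thesis using rc[OF u] unfolding r_def p_def q_def by simp
  next
    assume o: "alg_mult (transition_mat V \<beta>) 1 = 1"
    define i where "i = G.idx u"
    have i: "i < ?n" "?x ! i = u" using G.idx[OF u] unfolding i_def by auto
    have cf: "H.M *\<^sub>v col (transpose_mat Z) i = col (transpose_mat Z) i"
      using col_mult2[OF HM ZT i(1)] rowsfix2 by simp
    from H.fixed_const[OF o[unfolded H.P_eq] _ cf] ZT i obtain c where c: "\<forall>j<?k. col (transpose_mat Z) i $ j = c" by auto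
    have rc: "r (u, v') = Re c * p u * q v'" if v': "v' \<in> V" for v'
    proof -
      define j where "j = H.idx v'"
      have j: "j < ?k" "?y ! j = v'" using H.idx[OF v'] unfolding j_def by auto
      have "Re (Z $$ (i,j)) = Re c" using c i j Z by auto
      hence "r (u, v') / (p u * q v') = Re c" using Re_Z[OF i(1) j(1)] i j by simp
      thus ?thesis using ppos[OF u] qpos[OF v'] by (simp add: field_simps)
    qed
    have "p u = (\<Sum>v'\<in>V. r (u, v'))" using mU u by simp
    also have "\<dots> = Re c * p u * (\<Sum>v'\<in>V. q v')" unfolding sum_distrib_left by (intro sum.cong refl) (simp add: rc)
    also have "(\<Sum>v'\<in>V. q v') = 1" unfolding qH by (rule H.p_sum)
    finally have "Re c = 1" using ppos[OF u] by simp
    thus ?thesis using rc[OF v] unfolding r_def p_def q_def by simp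
  qed
qed


lemma not_wd_of_eigfuns:
  assumes fsU: "fully_supported U \<alpha>" and fsV: "fully_supported V \<beta>"
  and eF: "\<forall>u\<in>U. (\<Sum>u'\<in>U. \<alpha> u u' * F u') = lam * degree_fun U \<alpha> u * F u"
  and eG: "\<forall>v\<in>V. (\<Sum>v'\<in>V. \<beta> v v' * Gf v') = lam * degree_fun V \<beta> v * Gf v"
  and sF: "(\<Sum>u\<in>U. degree_fun U \<alpha> u * F u) = 0" and sG: "(\<Sum>v\<in>V. degree_fun V \<beta> v * Gf v) = 0"
  and u0: "\<exists>u\<in>U. F u \<noteq> 0" and v0: "\<exists>v\<in>V. Gf v \<noteq> 0"
  shows "\<not> weakly_disjoint U \<alpha> V \<beta>"
proof -
  interpret G: fsg U \<alpha> by (unfold_locales, rule fsU)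
  interpret H: fsg V \<beta> by (unfold_locales, rule fsV)
  from u0 obtain u0 where u0: "u0 \<in> U" "F u0 \<noteq> 0" by auto
  from v0 obtain v0 where v0: "v0 \<in> V" "Gf v0 \<noteq> 0" by auto
  show ?thesis
  proof (cases "lam^2 = 1")
    case True
    have edF: "\<forall>u\<in>U. \<forall>u'\<in>U. \<alpha> u u' \<noteq> 0 \<longrightarrow> (lam - 0) * F u' = (lam - 0) * lam * F u"
      using G.edge[OF eF[folded G.p_def] True] by simp
    have edG: "\<forall>v\<in>V. \<forall>v'\<in>V. \<beta> v v' \<noteq> 0 \<longrightarrow> (lam - 0) * Gf v' = (lam - 0) * lam * Gf v"
      using H.edge[OF eG[folded H.p_def] True] by simp
    have kap: "1 + lam^2 - 2*0*lam \<noteq> 0" using True by simp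
    show ?thesis by (rule joining_construct[OF fsU fsV eF eG sF sG edF edG kap u0 v0])
  next
    case False
    have edF: "\<forall>u\<in>U. \<forall>u'\<in>U. \<alpha> u u' \<noteq> 0 \<longrightarrow> (lam - lam) * F u' = (lam - lam) * lam * F u" by simp
    have edG: "\<forall>v\<in>V. \<forall>v'\<in>V. \<beta> v v' \<noteq> 0 \<longrightarrow> (lam - lam) * Gf v' = (lam - lam) * lam * Gf v" by simp
    have kap: "1 + lam^2 - 2*lam*lam \<noteq> 0" using False by (simp add: power2_eq_square)
    show ?thesis by (rule joining_construct[OF fsU fsV eF eG sF sG edF edG kap u0 v0])
  qed
qed

lemma spec_of_wd:
  assumes fsU: "fully_supported U \<alpha>" and fsV: "fully_supported V \<beta>"
    and wd: "weakly_disjoint U \<alpha> V \<beta>"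
  shows "(\<forall>c. eigenvalue (transition_mat U \<alpha>) c \<and> eigenvalue (transition_mat V \<beta>) c \<longrightarrow> c = 1)
     \<and> share_eigenvalue_overlap (transition_mat U \<alpha>) (transition_mat V \<beta>) 1 1"
proof
  interpret G: fsg U \<alpha> by (unfold_locales, rule fsU)
  interpret H: fsg V \<beta> by (unfold_locales, rule fsV)
  show "\<forall>c. eigenvalue (transition_mat U \<alpha>) c \<and> eigenvalue (transition_mat V \<beta>) c \<longrightarrow> c = 1"
  proof (intro allI impI)
    fix c assume "eigenvalue (transition_mat U \<alpha>) c \<and> eigenvalue (transition_mat V \<beta>) c"
    hence evG: "eigenvalue G.M c" and evH: "eigenvalue H.M c" unfolding G.P_eq H.P_eq by auto
    show "c = 1"
    proof (rule ccontr)
      assume c1: "c \<noteq> 1"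
      from G.eigfun[OF evG] obtain F where ic: "Im c = 0" and F0: "\<exists>u\<in>U. F u \<noteq> 0"
        and eF: "\<forall>u\<in>U. (\<Sum>u'\<in>U. \<alpha> u u' * F u') = Re c * G.p u * F u" by auto
      from H.eigfun[OF evH] obtain Gf where G0: "\<exists>v\<in>V. Gf v \<noteq> 0"
        and eG: "\<forall>v\<in>V. (\<Sum>v'\<in>V. \<beta> v v' * Gf v') = Re c * H.p v * Gf v" by auto
      have l1: "Re c \<noteq> 1" using c1 ic by (metis complex_eqI one_complex.sel(1) one_complex.sel(2))
      have sF: "(\<Sum>u\<in>U. G.p u * F u) = 0" by (rule G.eig_sum_zero[OF eF l1])
      have sG: "(\<Sum>v\<in>V. H.p v * Gf v) = 0" by (rule H.eig_sum_zero[OF eG l1])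
      have "\<not> weakly_disjoint U \<alpha> V \<beta>"
        by (rule not_wd_of_eigfuns[OF fsU fsV eF[unfolded G.p_def] eG[unfolded H.p_def]
              sF[unfolded G.p_def] sG[unfolded H.p_def] F0 G0])
      with wd show False by simp
    qed
  qed
  show "share_eigenvalue_overlap (transition_mat U \<alpha>) (transition_mat V \<beta>) 1 1"
    unfolding share_eigenvalue_overlap_def G.P_eq H.P_eq
  proof (intro conjI)
    show "eigenvalue G.M 1" by (rule G.ev_one)
    show "eigenvalue H.M 1" by (rule H.ev_one)
    have a1: "alg_mult G.M 1 \<ge> 1" by (rule G.alg_mult_pos)
    have b1: "alg_mult H.M 1 \<ge> 1" by (rule H.alg_mult_pos)
    have "\<not> (alg_mult G.M 1 \<ge> 2 \<and> alg_mult H.M 1 \<ge> 2)"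
    proof
      assume "alg_mult G.M 1 \<ge> 2 \<and> alg_mult H.M 1 \<ge> 2"
      hence a2: "alg_mult G.M 1 \<ge> 2" and b2: "alg_mult H.M 1 \<ge> 2" by auto
      from G.harm_nonconst[OF a2] obtain F u1 u2 where
        hF: "\<forall>u\<in>U. (\<Sum>u'\<in>U. \<alpha> u u' * F u') = G.p u * F u" and u12: "u1 \<in> U" "u2 \<in> U" "F u1 \<noteq> F u2" by auto
      from H.harm_nonconst[OF b2] obtain Gf v1 v2 where
        hG: "\<forall>v\<in>V. (\<Sum>v'\<in>V. \<beta> v v' * Gf v') = H.p v * Gf v" and v12: "v1 \<in> V" "v2 \<in> V" "Gf v1 \<noteq> Gf v2" by auto
      from G.center[OF hF u12] obtain F' where
        F': "\<forall>u\<in>U. (\<Sum>u'\<in>U. \<alpha> u u' * F' u') = 1 * G.p u * F' u" "(\<Sum>u\<in>U. G.p u * F' u) = 0" "\<exists>u\<in>U. F' u \<noteq> 0"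
        by blast
      from H.center[OF hG v12] obtain G' where
        G': "\<forall>v\<in>V. (\<Sum>v'\<in>V. \<beta> v v' * G' v') = 1 * H.p v * G' v" "(\<Sum>v\<in>V. H.p v * G' v) = 0" "\<exists>v\<in>V. G' v \<noteq> 0"
        by blast
      have "\<not> weakly_disjoint U \<alpha> V \<beta>"
        by (rule not_wd_of_eigfuns[OF fsU fsV F'(1)[unfolded G.p_def] G'(1)[unfolded H.p_def]
              F'(2)[unfolded G.p_def] G'(2)[unfolded H.p_def] F'(3) G'(3)])
      with wd show False by simp
    qed
    with a1 b1 show "1 = min (alg_mult G.M 1) (alg_mult H.M 1)" by linarith
  qed
qed


theorem proposition5p3:
  fixes U :: "'a set" and \<alpha> :: "'a \<Rightarrow> 'a \<Rightarrow> real"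
    and V :: "'b set" and \<beta> :: "'b \<Rightarrow> 'b \<Rightarrow> real"
  assumes "fully_supported U \<alpha>" and "fully_supported V \<beta>"
  shows "weakly_disjoint U \<alpha> V \<beta> \<longleftrightarrow>
    ((\<forall>c. eigenvalue (transition_mat U \<alpha>) c \<and> eigenvalue (transition_mat V \<beta>) c \<longrightarrow> c = 1)
     \<and> share_eigenvalue_overlap (transition_mat U \<alpha>) (transition_mat V \<beta>) 1 1)"
proof
  assume "weakly_disjoint U \<alpha> V \<beta>"
  then show "(\<forall>c. eigenvalue (transition_mat U \<alpha>) c \<and> eigenvalue (transition_mat V \<beta>) c \<longrightarrow> c = 1)
     \<and> share_eigenvalue_overlap (transition_mat U \<alpha>) (transition_mat V \<beta>) 1 1"
    by (rule spec_of_wd[OF assms])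
next
  assume h: "(\<forall>c. eigenvalue (transition_mat U \<alpha>) c \<and> eigenvalue (transition_mat V \<beta>) c \<longrightarrow> c = 1)
     \<and> share_eigenvalue_overlap (transition_mat U \<alpha>) (transition_mat V \<beta>) 1 1"
  hence common: "\<forall>c. eigenvalue (transition_mat U \<alpha>) c \<and> eigenvalue (transition_mat V \<beta>) c \<longrightarrow> c = 1"
    and m: "1 = min (alg_mult (transition_mat U \<alpha>) 1) (alg_mult (transition_mat V \<beta>) 1)"
    unfolding share_eigenvalue_overlap_def by auto
  from m have one: "alg_mult (transition_mat U \<alpha>) 1 = 1 \<or> alg_mult (transition_mat V \<beta>) 1 = 1"
    by (simp add: min_def split: if_splits)
  show "weakly_disjoint U \<alpha> V \<beta>" by (rule wd_of_spec[OF assms common one])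
qed

end
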